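(* Let $n\ge3$, $p=\frac{n+2}{n-2}$, $q=\frac n{n-2}$, $c_+>0$. Let $u\in C^2(H)\cap C^1(\overline H)$ satisfy $\Delta u=n(n-2)u^p$, $u>0$ in $H$, and $\frac{\partial u}{\partial t}=-c_+u^q$ on $\partial H$. Let $v(x)=|x|^{2-n}u(x/|x|^2)$ and, for $\lambda>0$, $w_\lambda(x)=v(x)-\frac{\lambda^{n-2}}{|x|^{n-2}}v\big(\frac{\lambda^2x}{|x|^2}\big)$. Then there exists $\Lambda>0$ such that for all $\lambda\ge\Lambda$, $w_\lambda(x)\ge0$ for all $x\in B_\lambda^+\setminus\{0\}$.
   Context: $H=\{(x',t): x'\in\mathbb{R}^{n-1}, t>0\}$, $\partial H=\{t=0\}$; $B_\lambda^+=\{x\in H:|x|<\lambda\}$. $\partial u/\partial t$ on $\partial H$ is the derivative in $t$ at $t=0$. *)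

theory Defs
  imports "HOL-Analysis.Analysis"
begin

text \<open>Upper half space with respect to a distinguished unit coordinate vector e (the t-direction).\<close>
definition halfspace :: "'a::euclidean_space \<Rightarrow> 'a set" where
  "halfspace e = {x. x \<bullet> e > 0}"

definition pd :: "('a::euclidean_space \<Rightarrow> real) \<Rightarrow> 'a \<Rightarrow> 'a \<Rightarrow> real" where
  "pd u i x = deriv (\<lambda>s. u (x + s *\<^sub>R i)) 0"

definition C2_on :: "'a::euclidean_space set \<Rightarrow> ('a \<Rightarrow> real) \<Rightarrow> bool" where
  "C2_on S u \<longleftrightarrow> continuous_on S u \<and>
     (\<forall>i\<in>Basis. (\<forall>x\<in>S. (\<lambda>s. u (x + s *\<^sub>R i)) differentiable (at 0)) \<and> continuous_on S (pd u i) \<and>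
        (\<forall>j\<in>Basis. (\<forall>x\<in>S. (\<lambda>s. pd u i (x + s *\<^sub>R j)) differentiable (at 0))
                   \<and> continuous_on S (pd (pd u i) j)))"

definition C1_upto :: "'a::euclidean_space set \<Rightarrow> ('a \<Rightarrow> real) \<Rightarrow> bool" where
  "C1_upto S u \<longleftrightarrow> continuous_on (closure S) u \<and>
     (\<forall>i\<in>Basis. \<exists>g. continuous_on (closure S) g \<and>
        (\<forall>x\<in>S. ((\<lambda>s. u (x + s *\<^sub>R i)) has_real_derivative g x) (at 0)))"

definition laplacian :: "('a::euclidean_space \<Rightarrow> real) \<Rightarrow> 'a \<Rightarrow> real" where
  "laplacian u x = (\<Sum>i\<in>Basis. pd (pd u i) i x)"

end

theory Submission
  imports Defs
begin

lemma second_deriv_min: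
  fixes k k' :: "real \<Rightarrow> real"
  assumes d: "d > 0"
    and k: "\<And>s. \<bar>s\<bar> < d \<Longrightarrow> (k has_real_derivative k' s) (at s)"
    and k2: "(k' has_real_derivative K2) (at 0)"
    and mn: "\<And>s. \<bar>s\<bar> < d \<Longrightarrow> k 0 \<le> k s"
  shows "K2 \<ge> 0"
proof (rule ccontr)
  assume "\<not> K2 \<ge> 0"
  hence neg: "K2 < 0" by simp
  have k0: "k' 0 = 0"
    using DERIV_local_min[OF k[of 0] d] mn d by (auto simp: abs_minus_commute)
  have "((\<lambda>y. (k' y - k' 0) / (y - 0)) \<longlongrightarrow> K2) (at 0)"
    using k2 has_field_derivative_iff by blast
  hence "((\<lambda>y. k' y / y) \<longlongrightarrow> K2) (at 0)" using k0 by simp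
  hence "\<forall>\<^sub>F y in at 0. k' y / y < 0"
    using neg by (metis order_tendstoD(2))
  then obtain e where e: "e > 0" "\<And>y. y \<noteq> 0 \<Longrightarrow> dist y 0 < e \<Longrightarrow> k' y / y < 0"
    unfolding eventually_at by auto
  define s1 where "s1 = min e d / 2"
  have s1: "0 < s1" "s1 < e" "s1 < d" using e d by (auto simp: s1_def)
  obtain z where z: "0 < z" "z < s1" "k s1 - k 0 = (s1 - 0) * k' z"
    using MVT2[of 0 s1 k k'] s1 k by force
  have "k' z / z < 0" using e(2)[of z] z s1 by auto
  hence "k' z < 0" using z by (simp add: divide_less_0_iff)
  hence "s1 * k' z < 0" using s1 by (simp add: mult_pos_neg)
  hence "k s1 < k 0" using z by simp
  thus False using mn[of s1] s1 by auto
qed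

lemma pd_line_deriv:
  fixes u :: "'a::euclidean_space \<Rightarrow> real"
  assumes "(\<lambda>r. u ((y + s *\<^sub>R i) + r *\<^sub>R i)) differentiable (at 0)"
  shows "((\<lambda>s. u (y + s *\<^sub>R i)) has_real_derivative pd u i (y + s *\<^sub>R i)) (at s)"
proof -
  have "((\<lambda>r. u ((y + s *\<^sub>R i) + r *\<^sub>R i)) has_real_derivative pd u i (y + s *\<^sub>R i)) (at 0)"
    using assms unfolding pd_def by (simp add: DERIV_deriv_iff_real_differentiable)
  hence "((\<lambda>r. u (y + (r + s) *\<^sub>R i)) has_real_derivative pd u i (y + s *\<^sub>R i)) (at 0)"
    by (simp add: algebra_simps scaleR_add_left)
  thus ?thesis using DERIV_shift[of "\<lambda>s. u (y + s *\<^sub>R i)" _ 0 s] by simp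
qed

lemma interior_lap:
  fixes u :: "'a::euclidean_space \<Rightarrow> real"
  assumes C2: "C2_on S u" and r: "r > 0" and sub: "ball y0 r \<subseteq> S"
    and P1: "\<And>i s. i \<in> Basis \<Longrightarrow> \<bar>s\<bar> < r \<Longrightarrow> ((\<lambda>s. P (y0 + s *\<^sub>R i)) has_real_derivative P1 i s) (at s)"
    and P2: "\<And>i. i \<in> Basis \<Longrightarrow> (P1 i has_real_derivative P2 i) (at 0)"
    and mn: "\<And>y. y \<in> ball y0 r \<Longrightarrow> u y0 - P y0 \<le> u y - P y"
  shows "laplacian u y0 \<ge> (\<Sum>i\<in>Basis. P2 i)"
  unfolding laplacian_def
proof (rule sum_mono)
  fix i :: 'a assume i: "i \<in> Basis"
  have y0S: "y0 \<in> S" using sub r by auto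
  have inb: "y0 + s *\<^sub>R i \<in> ball y0 r" if "\<bar>s\<bar> < r" for s
    using that i by (simp add: dist_norm)
  have du: "((\<lambda>s. u (y0 + s *\<^sub>R i)) has_real_derivative pd u i (y0 + s *\<^sub>R i)) (at s)"
    if "\<bar>s\<bar> < r" for s
  proof (rule pd_line_deriv)
    show "(\<lambda>r. u (y0 + s *\<^sub>R i + r *\<^sub>R i)) differentiable at 0"
      using C2 i inb[OF that] sub unfolding C2_on_def by blast
  qed
  have d2: "((\<lambda>s. pd u i (y0 + s *\<^sub>R i)) has_real_derivative pd (pd u i) i y0) (at 0)"
  proof -
    have "(\<lambda>s. pd u i (y0 + s *\<^sub>R i)) differentiable at 0"
      using C2 i y0S unfolding C2_on_def by blast
    thus ?thesis unfolding pd_def[of "pd u i"] by (simp add: DERIV_deriv_iff_real_differentiable)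
  qed
  have "pd (pd u i) i y0 - P2 i \<ge> 0"
  proof (rule second_deriv_min[of r "\<lambda>s. u (y0 + s *\<^sub>R i) - P (y0 + s *\<^sub>R i)"
        "\<lambda>s. pd u i (y0 + s *\<^sub>R i) - P1 i s"])
    show "0 < r" by fact
    show "((\<lambda>s. u (y0 + s *\<^sub>R i) - P (y0 + s *\<^sub>R i)) has_real_derivative
          pd u i (y0 + s *\<^sub>R i) - P1 i s) (at s)" if "\<bar>s\<bar> < r" for s
      using du[OF that] P1[OF i that] by (rule DERIV_diff)
    show "((\<lambda>s. pd u i (y0 + s *\<^sub>R i) - P1 i s) has_real_derivative pd (pd u i) i y0 - P2 i) (at 0)"
      using d2 P2[OF i] by (rule DERIV_diff)
    show "u (y0 + 0 *\<^sub>R i) - P (y0 + 0 *\<^sub>R i) \<le> u (y0 + s *\<^sub>R i) - P (y0 + s *\<^sub>R i)"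
      if "\<bar>s\<bar> < r" for s using mn[OF inb[OF that]] by simp
  qed
  thus "P2 i \<le> pd (pd u i) i y0" by simp
qed

definition rp :: "'a::euclidean_space \<Rightarrow> real \<Rightarrow> 'a \<Rightarrow> real" where
  "rp c b y = (norm (y - c))\<^sup>2 powr (b/2)"

definition rp1 :: "'a::euclidean_space \<Rightarrow> real \<Rightarrow> 'a \<Rightarrow> 'a \<Rightarrow> real \<Rightarrow> real" where
  "rp1 c b y i s = b/2 * ((norm (y - c))\<^sup>2 + 2 * s * ((y-c)\<bullet>i) + s\<^sup>2) powr (b/2-1) * (2*((y-c)\<bullet>i) + 2 * s)"

definition rp2 :: "'a::euclidean_space \<Rightarrow> real \<Rightarrow> 'a \<Rightarrow> 'a \<Rightarrow> real" where
  "rp2 c b y i = b/2 * ((b/2-1) * ((norm (y - c))\<^sup>2) powr (b/2-1-1) * (2*((y-c)\<bullet>i)) * (2*((y-c)\<bullet>i))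
      + ((norm (y - c))\<^sup>2) powr (b/2-1) * 2)"

lemma norm_line_sq:
  fixes d i :: "'a::euclidean_space"
  assumes "i \<in> Basis"
  shows "(norm (d + s *\<^sub>R i))\<^sup>2 = (norm d)\<^sup>2 + 2 * s * (d\<bullet>i) + s\<^sup>2"
proof -
  have ii: "i \<bullet> i = 1" using assms by simp
  have "(norm (d + s *\<^sub>R i))\<^sup>2 = (d + s *\<^sub>R i) \<bullet> (d + s *\<^sub>R i)" by (simp add: dot_square_norm)
  also have "\<dots> = d \<bullet> d + 2 * s * (d \<bullet> i) + s * s * (i \<bullet> i)"
    by (simp add: inner_add_left inner_add_right inner_commute algebra_simps)
  finally show ?thesis using ii by (simp add: dot_square_norm power2_eq_square)
qed

lemma rp_line1:
  fixes c y i :: "'a::euclidean_space"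
  assumes i: "i \<in> Basis" and s: "\<bar>s\<bar> < norm (y - c)"
  shows "((\<lambda>s. rp c b (y + s *\<^sub>R i)) has_real_derivative rp1 c b y i s) (at s)"
proof -
  define d where "d = y - c"
  define Q where "Q = (\<lambda>s. (norm d)\<^sup>2 + 2 * s * (d\<bullet>i) + s\<^sup>2)"
  have eq: "(\<lambda>s. rp c b (y + s *\<^sub>R i)) = (\<lambda>s. Q s powr (b/2))"
  proof
    fix s
    have e1: "y + s *\<^sub>R i - c = d + s *\<^sub>R i" by (simp add: d_def algebra_simps)
    have "rp c b (y + s *\<^sub>R i) = (norm (d + s *\<^sub>R i))\<^sup>2 powr (b/2)"
      by (simp only: rp_def e1)
    thus "rp c b (y + s *\<^sub>R i) = Q s powr (b/2)"
      unfolding Q_def using norm_line_sq[OF i] by simp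
  qed
  have "norm (d + s *\<^sub>R i) \<ge> norm d - norm (s *\<^sub>R i)" by (rule norm_diff_ineq)
  moreover have "norm (s *\<^sub>R i) = \<bar>s\<bar>" using i by simp
  ultimately have "norm (d + s *\<^sub>R i) > 0" using s unfolding d_def by linarith
  hence "(norm (d + s *\<^sub>R i))\<^sup>2 > 0" by simp
  hence Qpos: "Q s > 0" unfolding Q_def using norm_line_sq[OF i, of d s] by linarith
  have dQ: "(Q has_real_derivative (2*(d\<bullet>i) + 2 * s)) (at s)"
    unfolding Q_def by (auto intro!: derivative_eq_intros)
  have "((\<lambda>s. Q s powr (b/2)) has_real_derivative b/2 * Q s powr (b/2 - of_nat 1) * (2*(d\<bullet>i) + 2 * s)) (at s)"
    by (rule DERIV_fun_powr[OF dQ Qpos])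
  thus ?thesis unfolding eq rp1_def Q_def d_def by simp
qed

lemma rp_line2:
  fixes c y i :: "'a::euclidean_space"
  assumes i: "i \<in> Basis" and yc: "y \<noteq> c"
  shows "(rp1 c b y i has_real_derivative rp2 c b y i) (at 0)"
proof -
  define d where "d = y - c"
  define Q where "Q = (\<lambda>s. (norm d)\<^sup>2 + 2 * s * (d\<bullet>i) + s\<^sup>2)"
  have Qpos: "Q 0 > 0" using yc by (simp add: Q_def d_def)
  have dQ: "(Q has_real_derivative (2*(d\<bullet>i) + 2*0)) (at 0)"
    unfolding Q_def by (auto intro!: derivative_eq_intros)
  have h1: "((\<lambda>s. Q s powr (b/2-1)) has_real_derivative (b/2-1) * Q 0 powr (b/2-1 - of_nat 1) * (2*(d\<bullet>i) + 2*0)) (at 0)"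
    by (rule DERIV_fun_powr[OF dQ Qpos])
  have h2: "((\<lambda>s. 2*(d\<bullet>i) + 2 * s) has_real_derivative 2) (at 0)"
    by (auto intro!: derivative_eq_intros)
  have "((\<lambda>s. b/2 * (Q s powr (b/2-1) * (2*(d\<bullet>i) + 2 * s))) has_real_derivative
      b/2 * ((b/2-1) * Q 0 powr (b/2-1 - of_nat 1) * (2*(d\<bullet>i) + 2*0) * (2*(d\<bullet>i) + 2*0) + Q 0 powr (b/2-1) * 2)) (at 0)"
    using DERIV_cmult[OF DERIV_mult[OF h1 h2], of "b/2"] by (simp add: ac_simps)
  moreover have "rp1 c b y i = (\<lambda>s. b/2 * (Q s powr (b/2-1) * (2*(d\<bullet>i) + 2 * s)))"
    by (rule ext) (simp add: rp1_def Q_def d_def)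
  ultimately show ?thesis unfolding rp2_def by (simp add: Q_def d_def)
qed

lemma sum_inner_sq:
  fixes d :: "'a::euclidean_space"
  shows "(\<Sum>i\<in>Basis. (d\<bullet>i) * (d\<bullet>i)) = (norm d)\<^sup>2"
  by (simp add: power2_norm_eq_inner euclidean_inner[of d d])

lemma rp_lap:
  fixes c y :: "'a::euclidean_space"
  assumes yc: "y \<noteq> c"
  shows "(\<Sum>i\<in>Basis. rp2 c b y i) = b * (b + real DIM('a) - 2) * ((norm (y - c))\<^sup>2) powr (b/2 - 1)"
proof -
  define N where "N = (norm (y - c))\<^sup>2"
  have N: "N > 0" using yc by (simp add: N_def)
  have NN: "N powr (b/2-1-1) * N = N powr (b/2-1)"
  proof -
    have "N powr (b/2-1-1) * N = N powr (b/2-1-1) * N powr 1" using N by simp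
    also have "\<dots> = N powr (b/2-1-1+1)" by (rule powr_add[symmetric])
    also have "\<dots> = N powr (b/2-1)" by simp
    finally show ?thesis .
  qed
  have "(\<Sum>i\<in>Basis. rp2 c b y i) = (\<Sum>i\<in>Basis. b/2 * (b/2-1) * N powr (b/2-1-1) * 4 * (((y-c)\<bullet>i) * ((y-c)\<bullet>i))
      + b * N powr (b/2-1))"
  proof (rule sum.cong)
    fix i :: 'a
    have gen: "\<And>x. b/2 * ((b/2-1) * N powr (b/2-1-1) * (2*x) * (2*x) + N powr (b/2-1) * 2)
       = b/2 * (b/2-1) * N powr (b/2-1-1) * 4 * (x * x) + b * N powr (b/2-1)"
      by (simp add: algebra_simps)
    show "rp2 c b y i = b/2 * (b/2-1) * N powr (b/2-1-1) * 4 * (((y-c)\<bullet>i) * ((y-c)\<bullet>i))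
      + b * N powr (b/2-1)"
      unfolding rp2_def N_def[symmetric] by (rule gen)
  qed simp
  also have "\<dots> = b/2 * (b/2-1) * (N powr (b/2-1-1) * N) * 4 + real DIM('a) * (b * N powr (b/2-1))"
    by (simp add: sum.distrib sum_distrib_left[symmetric] sum_inner_sq N_def)
  also have "\<dots> = b/2 * (b/2-1) * N powr (b/2-1) * 4 + real DIM('a) * (b * N powr (b/2-1))"
    by (simp only: NN)
  also have "\<dots> = b * (b + real DIM('a) - 2) * N powr (b/2 - 1)"
    by (simp add: algebra_simps)
  finally show ?thesis unfolding N_def .
qed

lemma pos_min_compact:
  fixes f :: "'a::topological_space \<Rightarrow> real"
  assumes "compact S" "continuous_on S f" "\<forall>y\<in>S. f y > 0"
  shows "\<exists>m>0. \<forall>y\<in>S. m \<le> f y"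
proof (cases "S = {}")
  case True thus ?thesis by (intro exI[of _ 1]) auto
next
  case False
  then obtain x where "x \<in> S" "\<forall>y\<in>S. f x \<le> f y"
    using continuous_attains_inf[OF assms(1) False assms(2)] by blast
  thus ?thesis using assms(3) by blast
qed

lemma small_powr:
  fixes a Y Z :: real
  assumes "a > 0" "Y > 0" "Z > 0"
  shows "\<exists>\<epsilon>>0. \<epsilon> \<le> Z \<and> \<epsilon> powr a \<le> Y"
proof -
  define \<epsilon> where "\<epsilon> = min Z (Y powr (1/a))"
  have pos: "\<epsilon> > 0" using assms by (simp add: \<epsilon>_def)
  have "\<epsilon> powr a \<le> (Y powr (1/a)) powr a"
    using assms pos by (intro powr_mono2) (auto simp: \<epsilon>_def)
  also have "\<dots> = Y" using assms by (simp add: powr_powr)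
  finally have "\<epsilon> powr a \<le> Y" .
  moreover have "\<epsilon> \<le> Z" by (simp add: \<epsilon>_def)
  ultimately show ?thesis using pos by blast
qed

definition hb :: "'a::euclidean_space \<Rightarrow> real \<Rightarrow> 'a \<Rightarrow> real" where
  "hb e A y = (y\<bullet>e) + A*(y\<bullet>e)\<^sup>2 - (norm y)\<^sup>2"

lemma hb_line1:
  fixes e y0 i :: "'a::euclidean_space"
  assumes i: "i \<in> Basis"
  shows "((\<lambda>s. hb e A (y0 + s *\<^sub>R i)) has_real_derivative
     ((i\<bullet>e) + A*(2*(y0\<bullet>e + s*(i\<bullet>e))*(i\<bullet>e)) - (2*(y0\<bullet>i) + 2* s))) (at s)"
proof -
  have eq: "(\<lambda>s. hb e A (y0 + s *\<^sub>R i)) = (\<lambda>s. (y0\<bullet>e + s*(i\<bullet>e)) + A*(y0\<bullet>e + s*(i\<bullet>e))\<^sup>2 - ((norm y0)\<^sup>2 + 2 * s * (y0\<bullet>i) + s\<^sup>2))"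
    by (rule ext) (simp add: hb_def norm_line_sq[OF i] inner_add_left)
  show ?thesis unfolding eq
    by (auto intro!: derivative_eq_intros simp: algebra_simps)
qed

lemma hb_line2:
  fixes e y0 i :: "'a::euclidean_space"
  shows "((\<lambda>s. (i\<bullet>e) + A*(2*(y0\<bullet>e + s*(i\<bullet>e))*(i\<bullet>e)) - (2*(y0\<bullet>i) + 2* s)) has_real_derivative
     (A*(2*(i\<bullet>e)*(i\<bullet>e)) - 2)) (at 0)"
  by (auto intro!: derivative_eq_intros simp: algebra_simps)

lemma hb_lap:
  fixes e :: "'a::euclidean_space"
  assumes "e \<in> Basis"
  shows "(\<Sum>i\<in>Basis. \<epsilon> * (A*(2*(i\<bullet>e)*(i\<bullet>e)) - 2)) = \<epsilon> * (2*A - 2 * real DIM('a))"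
proof -
  have "(\<Sum>i\<in>Basis. \<epsilon> * (A*(2*(i\<bullet>e)*(i\<bullet>e)) - 2)) = \<epsilon> * (2*A) * (\<Sum>i\<in>Basis. (e\<bullet>i)*(e\<bullet>i)) - 2 * \<epsilon> * real DIM('a)"
    by (simp add: sum_subtractf sum_distrib_left inner_commute algebra_simps)
  also have "(\<Sum>i\<in>Basis. (e\<bullet>i)*(e\<bullet>i)) = 1" using sum_inner_sq[of e] assms by simp
  finally show ?thesis by (simp add: algebra_simps)
qed

lemma closure_hs:
  fixes e :: "'a::euclidean_space"
  assumes "e \<in> Basis"
  shows "closure (halfspace e) = {x. x \<bullet> e \<ge> 0}"
proof -
  have h: "halfspace e = {x. e \<bullet> x > 0}" by (auto simp: halfspace_def inner_commute)
  have "e \<noteq> 0" using assms by auto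
  hence "closure {x. e \<bullet> x > 0} = {x. e \<bullet> x \<ge> 0}" by (rule closure_halfspace_gt)
  thus ?thesis unfolding h by (simp add: inner_commute)
qed

lemma nonneg_closure:
  fixes u :: "'a::euclidean_space \<Rightarrow> real"
  assumes e: "e \<in> Basis" and cont: "continuous_on {x. x \<bullet> e \<ge> 0} u"
    and pos: "\<forall>x\<in>halfspace e. u x > 0" and x: "x \<bullet> e \<ge> 0"
  shows "u x \<ge> 0"
  using continuous_ge_on_closure[of "halfspace e" u x 0] cont pos x closure_hs[OF e]
  by fastforce

lemma hopf0:
  fixes u :: "'a::euclidean_space \<Rightarrow> real" and e :: 'a
  assumes n3: "DIM('a) \<ge> 3" and e: "e \<in> Basis"
    and C2: "C2_on (halfspace e) u"
    and cont: "continuous_on {x. x \<bullet> e \<ge> 0} u"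
    and pde: "\<forall>x\<in>halfspace e. laplacian u x
               = real DIM('a) * (real DIM('a) - 2) * u x powr ((real DIM('a) + 2) / (real DIM('a) - 2))"
    and pos: "\<forall>x\<in>halfspace e. u x > 0"
    and bd0: "((\<lambda>s. u (0 + s *\<^sub>R e)) has_real_derivative
                 (- c * u 0 powr (real DIM('a) / (real DIM('a) - 2)))) (at_right 0)"
  shows "u 0 > 0"
proof (rule ccontr)
  assume "\<not> u 0 > 0"
  moreover have "u 0 \<ge> 0" using nonneg_closure[OF e cont pos] by simp
  ultimately have u00: "u 0 = 0" by simp
  define n where "n = real DIM('a)"
  define p where "p = (n + 2) / (n - 2)"
  have n: "n \<ge> 3" using n3 by (simp add: n_def)
  have p1: "p - 1 > 0" using n by (simp add: p_def field_simps)
  have ee: "e \<bullet> e = 1" using e by simp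
  have ne: "norm e = 1" using e by simp
  define A where "A = n + 1"
  have A: "A \<ge> 1" using n by (simp add: A_def)
  define t1 where "t1 = 1 / (2 * (A + 1))"
  have t1: "t1 > 0" "t1 * (1 + A) = 1/2" using A by (auto simp: t1_def field_simps)
  define S1 where "S1 = sphere (0::'a) 1 \<inter> {y. e \<bullet> y \<ge> t1}"
  have cS1: "compact S1" unfolding S1_def
    by (intro compact_Int_closed compact_sphere closed_halfspace_ge)
  have S1H: "S1 \<subseteq> {x. x \<bullet> e \<ge> 0}" "\<forall>y\<in>S1. u y > 0"
    using t1 pos by (auto simp: S1_def halfspace_def inner_commute)
  obtain m1 where m1: "m1 > 0" "\<forall>y\<in>S1. m1 \<le> u y"
    using pos_min_compact[OF cS1 continuous_on_subset[OF cont S1H(1)] S1H(2)] by blast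
  have Ypos: "1 / (n * (n - 2) * (1 + A) powr p) > 0" using n A by simp
  obtain \<epsilon> where eps: "\<epsilon> > 0" "\<epsilon> \<le> m1 / (1 + A)" "\<epsilon> powr (p - 1) \<le> 1 / (n * (n - 2) * (1 + A) powr p)"
    using small_powr[OF p1 Ypos, of "m1 / (1 + A)"] m1 A by auto
  define Dc where "Dc = cball (0::'a) 1 \<inter> {y. e \<bullet> y \<ge> 0}"
  have cDc: "compact Dc" unfolding Dc_def
    by (intro compact_Int_closed compact_cball closed_halfspace_ge)
  have DcH: "Dc \<subseteq> {x. x \<bullet> e \<ge> 0}" by (auto simp: Dc_def inner_commute)
  define f where "f = (\<lambda>y. u y - \<epsilon> * hb e A y)"
  have cf: "continuous_on Dc f" unfolding f_def hb_def
    by (intro continuous_intros continuous_on_subset[OF cont DcH])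
  obtain y0 where y0: "y0 \<in> Dc" "\<forall>y\<in>Dc. f y0 \<le> f y"
  proof -
    have "(0::'a) \<in> Dc" by (simp add: Dc_def)
    hence "Dc \<noteq> {}" by blast
    thus ?thesis using continuous_attains_inf[OF cDc _ cf] that by blast
  qed
  have fy0: "f y0 \<ge> 0"
  proof (rule ccontr)
    assume "\<not> f y0 \<ge> 0"
    hence fneg: "f y0 < 0" by simp
    define t0 where "t0 = y0 \<bullet> e"
    have t0: "t0 \<ge> 0" "norm y0 \<le> 1" using y0 by (auto simp: t0_def Dc_def inner_commute)
    have "\<bar>t0\<bar> \<le> norm y0" unfolding t0_def using Basis_le_norm[OF e] by simp
    hence t01: "t0 \<le> 1" using t0 by simp
    have uy0: "u y0 \<ge> 0" using nonneg_closure[OF e cont pos] t0 by (simp add: t0_def)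
    have hby: "hb e A y0 = t0 + A * t0\<^sup>2 - (norm y0)\<^sup>2" by (simp add: hb_def t0_def)
    have t0sq: "t0\<^sup>2 \<le> t0" using t0 t01 by (simp add: power2_eq_square mult_left_le)
    have hbub: "hb e A y0 \<le> 1 + A"
    proof -
      have "A * t0\<^sup>2 \<le> A * 1" using t0sq t01 A by (intro mult_left_mono) auto
      moreover have "(norm y0)\<^sup>2 \<ge> 0" by simp
      ultimately show ?thesis unfolding hby using t01 by linarith
    qed
    consider "t0 = 0" | "t0 > 0" "norm y0 = 1" | "t0 > 0" "norm y0 < 1"
      using t0 by linarith
    thus False
    proof cases
      case 1
      hence "hb e A y0 \<le> 0" unfolding hby by simp
      hence "\<epsilon> * hb e A y0 \<le> 0" using eps(1) by (simp add: mult_nonneg_nonpos)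
        hence "f y0 \<ge> 0" unfolding f_def using uy0 by linarith
      thus False using fneg by simp
    next
      case 2
      show False
      proof (cases "t0 < t1")
        case True
        have "A * t0\<^sup>2 \<le> A * t0" using t0sq A by (intro mult_left_mono) auto
        also have "\<dots> \<le> A * t1" using True A by (intro mult_left_mono) auto
        finally have "hb e A y0 \<le> t1 * (1 + A) - 1" unfolding hby using 2 True
          by (simp add: algebra_simps)
        hence "hb e A y0 \<le> 0" using t1 by simp
        hence "\<epsilon> * hb e A y0 \<le> 0" using eps(1) by (simp add: mult_nonneg_nonpos)
        hence "f y0 \<ge> 0" unfolding f_def using uy0 by linarith
        thus False using fneg by simp
      next
        case False
        hence "y0 \<in> S1" using 2 by (simp add: S1_def t0_def inner_commute)
        hence "u y0 \<ge> m1" using m1 by blast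
        moreover have "\<epsilon> * hb e A y0 \<le> \<epsilon> * (1 + A)" using hbub eps(1) by simp
        moreover have "\<epsilon> * (1 + A) \<le> m1" using eps(2) A by (simp add: field_simps)
        ultimately have "f y0 \<ge> 0" unfolding f_def by simp
        thus False using fneg by simp
      qed
    next
      case 3
      define r where "r = min t0 (1 - norm y0)"
      have r: "r > 0" using 3 by (simp add: r_def)
      have ballsub: "ball y0 r \<subseteq> halfspace e \<inter> Dc"
      proof
        fix y assume y: "y \<in> ball y0 r"
        hence dy: "norm (y - y0) < r" by (simp add: dist_norm norm_minus_commute)
        have "\<bar>(y - y0) \<bullet> e\<bar> \<le> norm (y - y0)" using Basis_le_norm[OF e] by simp
        hence "y \<bullet> e > 0" using dy by (simp add: r_def t0_def inner_diff_left abs_le_iff; linarith)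
        moreover have "norm y \<le> norm y0 + norm (y - y0)" by (metis norm_triangle_sub add.commute)
        hence "norm y < 1" using dy by (simp add: r_def)
        ultimately show "y \<in> halfspace e \<inter> Dc" by (simp add: halfspace_def Dc_def inner_commute)
      qed
      have y0H: "y0 \<in> halfspace e" using 3 by (simp add: halfspace_def t0_def)
      have lap: "laplacian u y0 \<ge> (\<Sum>i\<in>Basis. \<epsilon> * (A*(2*(i\<bullet>e)*(i\<bullet>e)) - 2))"
      proof (rule interior_lap[OF C2 r, of y0 "\<lambda>y. \<epsilon> * hb e A y"
            "\<lambda>i s. \<epsilon> * ((i\<bullet>e) + A*(2*(y0\<bullet>e + s*(i\<bullet>e))*(i\<bullet>e)) - (2*(y0\<bullet>i) + 2 * s))"])
        show "ball y0 r \<subseteq> halfspace e" using ballsub by auto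
        show "((\<lambda>s. \<epsilon> * hb e A (y0 + s *\<^sub>R i)) has_real_derivative
              \<epsilon> * ((i\<bullet>e) + A*(2*(y0\<bullet>e + s*(i\<bullet>e))*(i\<bullet>e)) - (2*(y0\<bullet>i) + 2 * s))) (at s)"
          if "i \<in> Basis" for i s
          using DERIV_cmult[OF hb_line1[OF that, of e A y0 s], of \<epsilon>] by simp
        show "((\<lambda>s. \<epsilon> * ((i\<bullet>e) + A*(2*(y0\<bullet>e + s*(i\<bullet>e))*(i\<bullet>e)) - (2*(y0\<bullet>i) + 2 * s)))
              has_real_derivative \<epsilon> * (A*(2*(i\<bullet>e)*(i\<bullet>e)) - 2)) (at 0)" for i
          by (rule DERIV_cmult[OF hb_line2])
        show "u y0 - \<epsilon> * hb e A y0 \<le> u y - \<epsilon> * hb e A y" if "y \<in> ball y0 r" for y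
          using y0(2) ballsub that unfolding f_def by auto
      qed
      hence lap2: "laplacian u y0 \<ge> 2 * \<epsilon>"
        using hb_lap[OF e, of \<epsilon> A] by (simp add: A_def n_def algebra_simps)
      have upos: "u y0 > 0" using pos y0H by blast
      have "\<epsilon> * hb e A y0 \<le> \<epsilon> * (1 + A)" using hbub eps(1) by (intro mult_left_mono) auto
      hence ult: "u y0 < \<epsilon> * (1 + A)"
        using fneg unfolding f_def by linarith
      have "u y0 powr p < (\<epsilon> * (1 + A)) powr p"
        using upos ult p1 by (intro powr_less_mono2) auto
      also have "\<dots> = \<epsilon> powr p * (1 + A) powr p" using eps(1) A by (simp add: powr_mult)
      also have "\<epsilon> powr p = \<epsilon> * \<epsilon> powr (p - 1)"
      proof -
        have "\<epsilon> powr p = \<epsilon> powr (1 + (p - 1))" by simp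
        also have "\<dots> = \<epsilon> powr 1 * \<epsilon> powr (p - 1)" by (rule powr_add)
        finally show ?thesis using eps(1) by simp
      qed
      finally have "u y0 powr p < \<epsilon> * \<epsilon> powr (p - 1) * (1 + A) powr p" .
      also have "\<dots> \<le> \<epsilon> * (1 / (n * (n - 2) * (1 + A) powr p)) * (1 + A) powr p"
        using eps A by (intro mult_right_mono mult_left_mono) auto
      also have "\<dots> = \<epsilon> / (n * (n - 2))" using A by simp
      finally have "n * (n - 2) * u y0 powr p < \<epsilon>" using n by (simp add: field_simps)
      moreover have "laplacian u y0 = n * (n - 2) * u y0 powr p"
        using pde y0H by (simp add: n_def p_def)
      ultimately show False using lap2 eps(1) by simp
    qed
  qed
  have lb: "u (0 + s *\<^sub>R e) \<ge> \<epsilon> * s" if s: "0 < s" "s < 1" for s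
  proof -
    have "s *\<^sub>R e \<in> Dc" using s ne ee by (simp add: Dc_def)
    hence "f y0 \<le> f (s *\<^sub>R e)" using y0(2) by blast
    hence "f (s *\<^sub>R e) \<ge> 0" using fy0 by linarith
    moreover have "hb e A (s *\<^sub>R e) = s + A * s\<^sup>2 - s\<^sup>2" using s ne ee by (simp add: hb_def)
    moreover have "s\<^sup>2 \<le> A * s\<^sup>2" using A mult_right_mono[of 1 A "s\<^sup>2"] by simp
    hence "s + A * s\<^sup>2 - s\<^sup>2 \<ge> s" by simp
    ultimately have "hb e A (s *\<^sub>R e) \<ge> s" by simp
    hence "\<epsilon> * hb e A (s *\<^sub>R e) \<ge> \<epsilon> * s" using eps(1) by (intro mult_left_mono) auto
    with \<open>f (s *\<^sub>R e) \<ge> 0\<close> have "u (s *\<^sub>R e) \<ge> \<epsilon> * s" unfolding f_def by linarith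
    thus ?thesis by simp
  qed
  have "((\<lambda>y. (u (0 + y *\<^sub>R e) - u (0 + 0 *\<^sub>R e)) / (y - 0)) \<longlongrightarrow> - c * u 0 powr (n / (n - 2))) (at_right 0)"
    using has_field_derivative_iff[THEN iffD1, OF bd0] by (simp add: n_def)
  hence "((\<lambda>y. u (y *\<^sub>R e) / y) \<longlongrightarrow> 0) (at_right 0)" using u00 by simp
  hence ev1: "\<forall>\<^sub>F y in at_right 0. u (y *\<^sub>R e) / y < \<epsilon>"
    using eps(1) by (metis order_tendstoD(2))
  have ev2: "\<forall>\<^sub>F y in at_right 0. y \<in> {0<..<(1::real)}" by (rule eventually_at_right_real) simp
  have "\<forall>\<^sub>F y in at_right 0. u (y *\<^sub>R e) / y < \<epsilon> \<and> y \<in> {0<..<(1::real)}"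
    using ev1 ev2 by (rule eventually_conj)
  then obtain y where y: "u (y *\<^sub>R e) / y < \<epsilon>" "y \<in> {0<..<(1::real)}"
    using eventually_happens[of _ "at_right (0::real)"] by auto
  hence "u (y *\<^sub>R e) \<ge> \<epsilon> * y" using lb[of y] by simp
  hence "u (y *\<^sub>R e) / y \<ge> \<epsilon>" using y by (simp add: field_simps)
  thus False using y(1) by simp
qed

lemma rp_eq:
  fixes c y :: "'a::euclidean_space"
  assumes "y \<noteq> c"
  shows "rp c b y = norm (y - c) powr b"
proof -
  have eq: "(norm (y - c))\<^sup>2 = norm (y - c) powr 2" by simp
  have "rp c b y = (norm (y - c) powr 2) powr (b/2)" by (simp only: rp_def eq)
  also have "\<dots> = norm (y - c) powr (2 * (b/2))" by (simp only: powr_powr)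
  also have "\<dots> = norm (y - c) powr b" by simp
  finally show ?thesis .
qed

lemma rp_pos:
  fixes c y :: "'a::euclidean_space"
  assumes "y \<noteq> c"
  shows "rp c b y > 0"
  using assms by (simp add: rp_def)

lemma rp_cont:
  fixes c :: "'a::euclidean_space"
  assumes "c \<notin> S"
  shows "continuous_on S (rp c b)"
  unfolding rp_def using assms by (intro continuous_intros) auto

lemma right_deriv_neg:
  fixes g :: "real \<Rightarrow> real"
  assumes g: "(g has_real_derivative D) (at_right 0)" and D: "D < 0" and d: "d > 0"
  shows "\<exists>s. 0 < s \<and> s < d \<and> g s < g 0"
proof -
  have "((\<lambda>y. (g y - g 0) / (y - 0)) \<longlongrightarrow> D) (at_right 0)"
    using has_field_derivative_iff[THEN iffD1, OF g] .
  hence ev1: "\<forall>\<^sub>F y in at_right 0. (g y - g 0) / y < 0"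
    using D by (simp add: order_tendstoD(2))
  have ev2: "\<forall>\<^sub>F y in at_right 0. y \<in> {0<..<d}" by (rule eventually_at_right_real) fact
  have "\<forall>\<^sub>F y in at_right 0. (g y - g 0) / y < 0 \<and> y \<in> {0<..<d}"
    using ev1 ev2 by (rule eventually_conj)
  then obtain y where y: "(g y - g 0) / y < 0" "y \<in> {0<..<d}"
    using eventually_happens[of _ "at_right (0::real)"] by auto
  hence "g y - g 0 < 0" by (simp add: divide_less_0_iff)
  thus ?thesis using y by auto
qed

lemma KI:
  fixes n p \<delta> r r0 :: real
  assumes n: "n \<ge> 3" and p: "p = (n+2)/(n-2)" and \<delta>: "\<delta> > 0" and r0: "r0 > 0" and r: "r \<ge> r0"
    and d: "\<delta> powr (p-1) \<le> (n-1)*r0/(n*(n-2)*(1+1/r0) powr p)"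
  shows "n*(n-2)*(\<delta>*(r powr (2-n)*(1+1/r))) powr p \<le> \<delta>*(n-1)*r powr (-1-n)"
proof -
  have rpos: "r > 0" using r r0 by simp
  have pp: "p > 0" using n by (simp add: p)
  have e1: "(2-n)*p = -(n+2)" using n by (simp add: p field_simps)
  have "(\<delta>*(r powr (2-n)*(1+1/r))) powr p = \<delta> powr p * (r powr (2-n)) powr p * (1+1/r) powr p"
    using \<delta> rpos by (simp add: powr_mult)
  also have "(r powr (2-n)) powr p = r powr (-(n+2))" using e1 by (simp add: powr_powr)
  also have "\<delta> powr p = \<delta> * \<delta> powr (p-1)"
  proof -
    have "\<delta> powr p = \<delta> powr (1 + (p-1))" by simp
    also have "\<dots> = \<delta> powr 1 * \<delta> powr (p-1)" by (rule powr_add)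
    finally show ?thesis using \<delta> by simp
  qed
  also have "(1+1/r) powr p \<le> (1+1/r0) powr p"
    using r r0 rpos pp by (intro powr_mono2) (auto simp: field_simps)
  hence "\<delta> * \<delta> powr (p-1) * r powr (-(n+2)) * (1+1/r) powr p \<le> \<delta> * \<delta> powr (p-1) * r powr (-(n+2)) * (1+1/r0) powr p"
    using \<delta> by (intro mult_left_mono) auto
  finally have A: "(\<delta>*(r powr (2-n)*(1+1/r))) powr p \<le> \<delta> * r powr (-(n+2)) * (\<delta> powr (p-1) * (1+1/r0) powr p)"
    by (simp add: ac_simps)
  have B: "\<delta> powr (p-1) * (1+1/r0) powr p \<le> (n-1)*r0/(n*(n-2))"
  proof -
    have "1+1/r0 > 0" using r0 by (simp add: add_pos_pos)
    hence pos: "(1+1/r0) powr p > 0" by simp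
    have "\<delta> powr (p-1) * (1+1/r0) powr p \<le> (n-1)*r0/(n*(n-2)*(1+1/r0) powr p) * (1+1/r0) powr p"
      using d pos by (intro mult_right_mono) auto
    also have "\<dots> = (n-1)*r0/(n*(n-2))" using pos by simp
    finally show ?thesis .
  qed
  have C: "(n-1)*r0/(n*(n-2)) \<le> (n-1)*r/(n*(n-2))"
    using n r by (intro divide_right_mono mult_left_mono) auto
  have "n*(n-2)*(\<delta>*(r powr (2-n)*(1+1/r))) powr p \<le> n*(n-2)*(\<delta> * r powr (-(n+2)) * ((n-1)*r/(n*(n-2))))"
    using A B C n \<delta> by (intro mult_left_mono order.trans[OF A] mult_left_mono) (auto intro: order.trans)
  also have "\<dots> = \<delta> * (n-1) * (r * r powr (-(n+2)))" using n by (simp add: field_simps)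
  also have "r * r powr (-(n+2)) = r powr (-1-n)"
  proof -
    have "r * r powr (-(n+2)) = r powr 1 * r powr (-(n+2))" using rpos by simp
    also have "\<dots> = r powr (1 + -(n+2))" by (rule powr_add[symmetric])
    finally show ?thesis by (simp add: algebra_simps)
  qed
  finally show ?thesis .
qed

lemma norm_plus_e:
  fixes y e :: "'a::euclidean_space"
  assumes e: "e \<in> Basis" and y: "y \<bullet> e \<ge> 0"
  shows "norm (y - - e) \<ge> 1 + y \<bullet> e"
proof -
  have "\<bar>(y + e) \<bullet> e\<bar> \<le> norm (y + e)" using Basis_le_norm[OF e] by simp
  moreover have "(y + e) \<bullet> e = y \<bullet> e + 1" using e by (simp add: inner_add_left)
  ultimately show ?thesis using y by simp
qed

lemma inf_bound:
  fixes y e :: "'a::euclidean_space"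
  assumes n3: "DIM('a) \<ge> 3" and e: "e \<in> Basis" and ye: "y \<bullet> e \<ge> 0" and r1: "norm y \<ge> 1"
  shows "rp 0 (2 - real DIM('a)) y + rp 0 (1 - real DIM('a)) y \<le> (4 / sqrt (norm y)) * rp (-e) (-1/2) y"
proof -
  define n where "n = real DIM('a)"
  define r where "r = norm y"
  have n: "n \<ge> 3" using n3 by (simp add: n_def)
  have r: "r \<ge> 1" using r1 by (simp add: r_def)
  have y0: "y \<noteq> 0" using r1 by auto
  have ye': "y \<noteq> - e"
  proof
    assume "y = - e" hence "y \<bullet> e = -1" using e by simp
    thus False using ye by simp
  qed
  have "rp 0 (2 - n) y = r powr (2 - n)" using rp_eq[OF y0] by (simp add: r_def)
  also have "\<dots> \<le> r powr (-1)" using n r by (intro powr_mono) auto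
  finally have a1: "rp 0 (2 - n) y \<le> 1 / r" using r by (simp add: powr_neg_one)
  have "rp 0 (1 - n) y = r powr (1 - n)" using rp_eq[OF y0] by (simp add: r_def)
  also have "\<dots> \<le> r powr (-1)" using n r by (intro powr_mono) auto
  finally have a2: "rp 0 (1 - n) y \<le> 1 / r" using r by (simp add: powr_neg_one)
  define N where "N = norm (y - - e)"
  have N1: "N \<ge> 1" using norm_plus_e[OF e ye] ye by (simp add: N_def)
  have "N \<le> norm y + norm e" unfolding N_def by (simp add: norm_triangle_ineq)
  hence N2: "N \<le> 2 * r" using e r by (simp add: r_def)
  have "rp (-e) (-1/2) y = N powr (-1/2)" using rp_eq[OF ye'] by (simp add: N_def)
  also have "\<dots> \<ge> (2 * r) powr (-1/2)" using N1 N2 by (intro powr_mono2') auto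
  finally have b: "rp (-e) (-1/2) y \<ge> 1 / sqrt (2 * r)"
    using r by (simp add: powr_minus_divide powr_half_sqrt)
  have "(4 / sqrt r) * (1 / sqrt (2 * r)) = 4 / (sqrt 2 * r)"
    using r by (simp add: real_sqrt_mult field_simps)
  also have "\<dots> \<ge> 2 / r"
  proof -
    have "sqrt 2 \<le> 2" using sqrt2_less_2 by simp
    thus ?thesis using r by (simp add: field_simps)
  qed
  finally have "2 / r \<le> (4 / sqrt r) * (1 / sqrt (2 * r))" .
  also have "\<dots> \<le> (4 / sqrt r) * rp (-e) (-1/2) y" using b r by (intro mult_left_mono) auto
  finally show ?thesis using a1 a2 unfolding n_def[symmetric] r_def[symmetric] by simp
qed

lemma normsq_powr:
  fixes y c :: "'a::euclidean_space"
  assumes "y \<noteq> c"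
  shows "((norm (y - c))\<^sup>2) powr t = norm (y - c) powr (2 * t)"
proof -
  have eq: "(norm (y - c))\<^sup>2 = norm (y - c) powr 2" by simp
  show ?thesis by (simp only: eq powr_powr)
qed

lemma Phi_eq:
  fixes y :: "'a::euclidean_space"
  assumes "y \<noteq> 0"
  shows "rp 0 (2 - n) y + rp 0 (1 - n) y = norm y powr (2 - n) * (1 + 1 / norm y)"
proof -
  have r: "norm y > 0" using assms by simp
  have "norm y powr (1 - n) = norm y powr ((2 - n) + (-1))" by simp
  also have "\<dots> = norm y powr (2 - n) * norm y powr (-1)" by (rule powr_add)
  finally have "norm y powr (1 - n) = norm y powr (2 - n) / norm y" using r by (simp add: powr_neg_one)
  thus ?thesis using rp_eq[OF assms, of "2-n"] rp_eq[OF assms, of "1-n"] by (simp add: field_simps)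
qed

lemma lower_bound:
  fixes u :: "'a::euclidean_space \<Rightarrow> real" and e :: 'a
  assumes n3: "DIM('a) \<ge> 3" and e: "e \<in> Basis" and c: "c \<ge> 0"
    and C2: "C2_on (halfspace e) u"
    and cont: "continuous_on {x. x \<bullet> e \<ge> 0} u"
    and pde: "\<forall>x\<in>halfspace e. laplacian u x
               = real DIM('a) * (real DIM('a) - 2) * u x powr ((real DIM('a) + 2) / (real DIM('a) - 2))"
    and pos: "\<forall>x\<in>halfspace e. u x > 0"
    and bdry: "\<forall>x. x \<bullet> e = 0 \<longrightarrow>
               ((\<lambda>s. u (x + s *\<^sub>R e)) has_real_derivative
                 (- c * u x powr (real DIM('a) / (real DIM('a) - 2)))) (at_right 0)"
    and r0: "r0 > 0" and m0: "m0 > 0"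
    and near: "\<forall>y. y \<bullet> e \<ge> 0 \<and> norm y = r0 \<longrightarrow> u y \<ge> m0"
  shows "\<exists>\<delta>>0. \<forall>y. y \<bullet> e \<ge> 0 \<and> norm y \<ge> r0 \<longrightarrow> u y \<ge> \<delta> * norm y powr (2 - real DIM('a))"
proof -
  define n where "n = real DIM('a)"
  define p where "p = (n + 2) / (n - 2)"
  define q where "q = n / (n - 2)"
  have n: "n \<ge> 3" using n3 by (simp add: n_def)
  have p1: "p - 1 > 0" using n by (simp add: p_def field_simps)
  define \<phi> where "\<phi> = rp (-e) (-1/2)"
  define \<Phi> where "\<Phi> = (\<lambda>y::'a. rp 0 (2 - n) y + rp 0 (1 - n) y)"
  have neq: "y \<noteq> - e" if "y \<bullet> e \<ge> 0" for y
  proof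
    assume "y = - e" hence "y \<bullet> e = -1" using e by simp
    thus False using that by simp
  qed
  have phipos: "\<phi> y > 0" if "y \<bullet> e \<ge> 0" for y
    unfolding \<phi>_def by (rule rp_pos[OF neq[OF that]])
  have Phieq: "\<Phi> y = norm y powr (2 - n) * (1 + 1 / norm y)" if "y \<noteq> 0" for y
    unfolding \<Phi>_def by (rule Phi_eq[OF that])
  have Phige: "\<Phi> y \<ge> norm y powr (2 - n)" if "y \<noteq> 0" for y
  proof -
    have "norm y powr (2 - n) * 1 \<le> norm y powr (2 - n) * (1 + 1 / norm y)"
      by (intro mult_left_mono) auto
    thus ?thesis using Phieq[OF that] by simp
  qed
  define \<Phi>0 where "\<Phi>0 = r0 powr (2 - n) * (1 + 1 / r0)"
  have Phi0: "\<Phi>0 > 0" using r0 by (simp add: \<Phi>0_def add_pos_pos)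
  have Ypos: "(n-1)*r0/(n*(n-2)*(1+1/r0) powr p) > 0"
  proof -
    have "1+1/r0 > 0" using r0 by (simp add: add_pos_pos)
    thus ?thesis using n r0 by simp
  qed
  obtain \<delta> where \<delta>: "\<delta> > 0" "\<delta> \<le> m0 / \<Phi>0" "\<delta> powr (p - 1) \<le> (n-1)*r0/(n*(n-2)*(1+1/r0) powr p)"
    using small_powr[OF p1 Ypos, of "m0 / \<Phi>0"] m0 Phi0 by auto
  have unn: "u y \<ge> 0" if "y \<bullet> e \<ge> 0" for y using nonneg_closure[OF e cont pos that] .
  have main: "u y \<ge> \<delta> * \<Phi> y" if y: "y \<bullet> e \<ge> 0" "norm y \<ge> r0" for y
  proof (rule ccontr)
    assume "\<not> u y \<ge> \<delta> * \<Phi> y"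
    hence y1: "u y < \<delta> * \<Phi> y" by simp
    define Q where "Q = (\<lambda>y. (u y - \<delta> * \<Phi> y) / \<phi> y)"
    define m1 where "m1 = Q y"
    have m1: "m1 < 0" unfolding m1_def Q_def using y1 phipos[OF y(1)] by (simp add: divide_neg_pos)
    define w where "w = 8 * \<delta> / (- m1)"
    have wpos: "w > 0" using \<delta> m1 unfolding w_def by (intro divide_pos_pos) auto
    define R1 where "R1 = max (max 1 (norm y)) (w\<^sup>2)"
    have tail: "Q z \<ge> m1 / 2" if z: "z \<bullet> e \<ge> 0" "norm z \<ge> R1" for z
    proof -
      have z1: "norm z \<ge> 1" using z by (simp add: R1_def)
      have ib: "\<Phi> z \<le> (4 / sqrt (norm z)) * \<phi> z"
        using inf_bound[OF n3 e z(1) z1] by (simp add: \<Phi>_def \<phi>_def n_def)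
      have "w\<^sup>2 \<le> norm z" using z(2) unfolding R1_def max.bounded_iff by blast
      hence "sqrt (w\<^sup>2) \<le> sqrt (norm z)" by (rule real_sqrt_le_mono)
      hence sq: "sqrt (norm z) \<ge> w" using wpos by simp
      have "norm z > 0" using z1 by linarith
      hence sqpos: "sqrt (norm z) > 0" by simp
      have "4 / sqrt (norm z) \<le> 4 / w"
        using sq wpos sqpos by (intro divide_left_mono) auto
      also have "\<dots> = - m1 / (2 * \<delta>)" using \<delta> m1 by (simp add: w_def field_simps)
      finally have X: "\<delta> * (4 / sqrt (norm z)) \<le> - m1 / 2" using \<delta> by (simp add: field_simps)
      have "\<delta> * \<Phi> z \<le> \<delta> * ((4 / sqrt (norm z)) * \<phi> z)" using ib \<delta> by (intro mult_left_mono) auto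
      also have "\<dots> = (\<delta> * (4 / sqrt (norm z))) * \<phi> z" by simp
      also have "\<dots> \<le> (- m1 / 2) * \<phi> z" using X phipos[OF z(1)] by (intro mult_right_mono) auto
      finally have "\<delta> * \<Phi> z \<le> (- m1 / 2) * \<phi> z" .
      hence "u z - \<delta> * \<Phi> z \<ge> (m1 / 2) * \<phi> z" using unn[OF z(1)] by simp
      thus ?thesis unfolding Q_def using phipos[OF z(1)] by (simp add: le_divide_eq)
    qed
    define K where "K = cball (0::'a) R1 \<inter> ({z. e \<bullet> z \<ge> 0} \<inter> - ball 0 r0)"
    have cK: "compact K" unfolding K_def
      by (intro compact_Int_closed compact_cball closed_Int closed_halfspace_ge) auto
    have yK: "y \<in> K" using y by (auto simp: K_def R1_def inner_commute)
    have ee: "e \<bullet> e = 1" using e by simp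
    have K0: "0 \<notin> K" "-e \<notin> K" using r0 ee by (auto simp: K_def inner_commute)
    have KH: "K \<subseteq> {x. x \<bullet> e \<ge> 0}" by (auto simp: K_def inner_commute)
    have cQ: "continuous_on K Q" unfolding Q_def \<Phi>_def \<phi>_def
    proof (intro continuous_intros continuous_on_subset[OF cont KH] rp_cont K0)
      show "\<forall>x\<in>K. rp (- e) (- 1 / 2) x \<noteq> 0" using phipos KH unfolding \<phi>_def by fastforce
    qed
    obtain y0 where y0: "y0 \<in> K" "\<forall>z\<in>K. Q y0 \<le> Q z"
      using continuous_attains_inf[OF cK _ cQ] yK by blast
    define m where "m = Q y0"
    have mm1: "m \<le> m1" using y0 yK by (simp add: m_def m1_def)
    have y0e: "y0 \<bullet> e \<ge> 0" "norm y0 \<ge> r0" using y0 by (auto simp: K_def inner_commute)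
    have glob: "Q z \<ge> m" if z: "z \<bullet> e \<ge> 0" "norm z \<ge> r0" for z
    proof (cases "norm z \<le> R1")
      case True hence "z \<in> K" using z by (auto simp: K_def inner_commute)
      thus ?thesis using y0 by (simp add: m_def)
    next
      case False thus ?thesis using tail[OF z(1)] m1 mm1 by simp
    qed
    have psi: "u z - (\<delta> * \<Phi> z + m * \<phi> z) \<ge> 0" if z: "z \<bullet> e \<ge> 0" "norm z \<ge> r0" for z
    proof -
      have "m \<le> (u z - \<delta> * \<Phi> z) / \<phi> z" using glob[OF z] by (simp add: Q_def)
      hence "m * \<phi> z \<le> u z - \<delta> * \<Phi> z" using phipos[OF z(1)] by (simp add: le_divide_eq)
      thus ?thesis by simp
    qed
    have psi0: "u y0 - (\<delta> * \<Phi> y0 + m * \<phi> y0) = 0"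
      using phipos[OF y0e(1)] by (simp add: m_def Q_def)
    have mneg: "m < 0" using mm1 m1 by simp
    have y0r0: "norm y0 > r0"
    proof (rule ccontr)
      assume "\<not> norm y0 > r0" hence nr: "norm y0 = r0" using y0e by simp
      have "y0 \<noteq> 0" using nr r0 by auto
      hence "\<Phi> y0 = \<Phi>0" using Phieq nr by (simp add: \<Phi>0_def)
      hence "\<delta> * \<Phi> y0 \<le> m0" using \<delta>(2) Phi0 by (simp add: field_simps)
      moreover have "u y0 \<ge> m0" using near y0e nr by blast
      ultimately have "Q y0 \<ge> 0" unfolding Q_def using phipos[OF y0e(1)] by simp
      thus False using mneg by (simp add: m_def)
    qed
    have y00: "y0 \<noteq> 0" using y0r0 r0 by auto
    have y0e': "y0 \<noteq> - e" using neq[OF y0e(1)] .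
    have u0pos: "u y0 \<ge> 0" using unn[OF y0e(1)] .
    have y0pe: "y0 + e \<noteq> 0" using y0e' by (metis eq_neg_iff_add_eq_0)
    show False
    proof (cases "y0 \<bullet> e = 0")
      case True
      define X where "X = (norm (y0 - - e))\<^sup>2"
      have Xpos: "X > 0" using y0pe by (simp add: X_def)
      have dP: "((\<lambda>s. \<delta> * \<Phi> (y0 + s *\<^sub>R e) + m * \<phi> (y0 + s *\<^sub>R e)) has_real_derivative
          \<delta> * (rp1 0 (2 - n) y0 e 0 + rp1 0 (1 - n) y0 e 0) + m * rp1 (-e) (-1/2) y0 e 0) (at 0)"
        unfolding \<Phi>_def \<phi>_def
        by (intro DERIV_add DERIV_cmult rp_line1 e) (use y00 y0e' y0pe in auto)
      have r1: "rp1 0 b y0 e 0 = 0" for b using True by (simp add: rp1_def)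
      have r2: "rp1 (-e) (-1/2) y0 e 0 = -1/2 * X powr (-1/2/2 - 1)"
        using e True by (simp add: rp1_def X_def inner_add_left)
      have dU: "((\<lambda>s. u (y0 + s *\<^sub>R e)) has_real_derivative (- c * u y0 powr q)) (at_right 0)"
        using bdry True by (simp add: q_def n_def)
      have dG: "((\<lambda>s. u (y0 + s *\<^sub>R e) - (\<delta> * \<Phi> (y0 + s *\<^sub>R e) + m * \<phi> (y0 + s *\<^sub>R e))) has_real_derivative
          (- c * u y0 powr q) - (m * (-1/2 * X powr (-1/2/2 - 1)))) (at_right 0)"
        using DERIV_diff[OF dU has_field_derivative_at_within[OF dP]] r1 r2 by simp
      have "c * u y0 powr q \<ge> 0" using c u0pos by simp
      moreover have "m * (-1/2 * X powr (-1/2/2 - 1)) > 0"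
      proof -
        have "-1/2 * X powr (-1/2/2 - 1) < 0" using Xpos by simp
        thus ?thesis using mneg by (intro mult_neg_neg) auto
      qed
      ultimately have Dneg: "(- c * u y0 powr q) - (m * (-1/2 * X powr (-1/2/2 - 1))) < 0" by simp
      obtain s where s: "0 < s" "s < 1"
        "u (y0 + s *\<^sub>R e) - (\<delta> * \<Phi> (y0 + s *\<^sub>R e) + m * \<phi> (y0 + s *\<^sub>R e)) <
         u (y0 + 0 *\<^sub>R e) - (\<delta> * \<Phi> (y0 + 0 *\<^sub>R e) + m * \<phi> (y0 + 0 *\<^sub>R e))"
        using right_deriv_neg[OF dG Dneg, of 1] by auto
      have "(norm (y0 + s *\<^sub>R e))\<^sup>2 = (norm y0)\<^sup>2 + s\<^sup>2" using norm_line_sq[OF e, of y0 s] True by simp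
      hence "(norm (y0 + s *\<^sub>R e))\<^sup>2 \<ge> (norm y0)\<^sup>2" by simp
      hence "norm (y0 + s *\<^sub>R e) \<ge> norm y0" by (simp add: power2_le_iff_abs_le)
      moreover have "(y0 + s *\<^sub>R e) \<bullet> e \<ge> 0" using True e s by (simp add: inner_add_left)
      ultimately have "u (y0 + s *\<^sub>R e) - (\<delta> * \<Phi> (y0 + s *\<^sub>R e) + m * \<phi> (y0 + s *\<^sub>R e)) \<ge> 0"
        using psi y0e by (meson order_trans)
      thus False using s(3) psi0 by simp
    next
      case False
      hence y0H: "y0 \<bullet> e > 0" using y0e by simp
      define r where "r = min (y0 \<bullet> e) (norm y0 - r0)"
      have r: "r > 0" using y0H y0r0 by (simp add: r_def)
      have ballsub: "ball y0 r \<subseteq> {z. z \<bullet> e > 0 \<and> norm z \<ge> r0}"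
      proof
        fix z assume z: "z \<in> ball y0 r"
        hence dz: "norm (z - y0) < r" by (simp add: dist_norm norm_minus_commute)
        have "\<bar>(z - y0) \<bullet> e\<bar> \<le> norm (z - y0)" using Basis_le_norm[OF e] by simp
        hence "z \<bullet> e > 0" using dz by (simp add: r_def inner_diff_left abs_le_iff; linarith)
        moreover have "norm y0 \<le> norm z + norm (y0 - z)" by (metis norm_triangle_sub)
        hence "norm z \<ge> r0" using dz by (simp add: r_def norm_minus_commute)
        ultimately show "z \<in> {z. z \<bullet> e > 0 \<and> norm z \<ge> r0}" by simp
      qed
      have rle: "r \<le> norm (y0 - 0)" "r \<le> norm (y0 - - e)"
        using norm_plus_e[OF e y0e(1)] r0 by (auto simp: r_def)
      have lap: "laplacian u y0 \<ge> (\<Sum>i\<in>Basis. \<delta> * (rp2 0 (2 - n) y0 i + rp2 0 (1 - n) y0 i) + m * rp2 (-e) (-1/2) y0 i)"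
      proof (rule interior_lap[OF C2 r, of y0 "\<lambda>z. \<delta> * \<Phi> z + m * \<phi> z"
            "\<lambda>i s. \<delta> * (rp1 0 (2 - n) y0 i s + rp1 0 (1 - n) y0 i s) + m * rp1 (-e) (-1/2) y0 i s"])
        show "ball y0 r \<subseteq> halfspace e" using ballsub by (auto simp: halfspace_def)
        show "((\<lambda>s. \<delta> * \<Phi> (y0 + s *\<^sub>R i) + m * \<phi> (y0 + s *\<^sub>R i)) has_real_derivative
           \<delta> * (rp1 0 (2 - n) y0 i s + rp1 0 (1 - n) y0 i s) + m * rp1 (-e) (-1/2) y0 i s) (at s)"
          if "i \<in> Basis" "\<bar>s\<bar> < r" for i s
          unfolding \<Phi>_def \<phi>_def
          by (intro DERIV_add DERIV_cmult rp_line1 that) (use that rle in auto)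
        show "((\<lambda>s. \<delta> * (rp1 0 (2 - n) y0 i s + rp1 0 (1 - n) y0 i s) + m * rp1 (-e) (-1/2) y0 i s)
           has_real_derivative \<delta> * (rp2 0 (2 - n) y0 i + rp2 0 (1 - n) y0 i) + m * rp2 (-e) (-1/2) y0 i) (at 0)"
          if "i \<in> Basis" for i
          by (intro DERIV_add DERIV_cmult rp_line2 that y00 y0e')
        show "u y0 - (\<delta> * \<Phi> y0 + m * \<phi> y0) \<le> u z - (\<delta> * \<Phi> z + m * \<phi> z)" if "z \<in> ball y0 r" for z
          using psi0 psi[of z] ballsub that by auto
      qed
      have L1: "(\<Sum>i\<in>Basis. rp2 0 (2 - n) y0 i) = 0"
        using rp_lap[OF y00, of "2 - n"] by (simp add: n_def)
      have ex: "2 * ((1 - n)/2 - 1) = -1 - n" by (simp add: field_simps)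
      have N1: "((norm (y0 - 0))\<^sup>2) powr ((1-n)/2 - 1) = norm y0 powr (-1-n)"
      proof -
        have "((norm (y0 - 0))\<^sup>2) powr ((1-n)/2-1) = norm (y0 - 0) powr (2*((1-n)/2-1))" by (rule normsq_powr[OF y00])
        thus ?thesis unfolding ex by simp
      qed
      have "(\<Sum>i\<in>Basis. rp2 0 (1 - n) y0 i) = (1-n) * ((1-n) + n - 2) * ((norm (y0 - 0))\<^sup>2) powr ((1-n)/2 - 1)"
        using rp_lap[OF y00, of "1-n"] unfolding n_def .
      also have "\<dots> = (1-n) * ((1-n) + n - 2) * norm y0 powr (-1-n)" by (simp only: N1)
      finally have L2: "(\<Sum>i\<in>Basis. rp2 0 (1 - n) y0 i) = (n - 1) * norm y0 powr (-1 - n)" by (simp add: algebra_simps)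
      have L3: "(\<Sum>i\<in>Basis. rp2 (-e) (-1/2) y0 i) < 0"
      proof -
        have "(\<Sum>i\<in>Basis. rp2 (-e) (-1/2) y0 i) = (-1/2) * (-1/2 + n - 2) * ((norm (y0 - - e))\<^sup>2) powr (-1/2/2 - 1)"
          using rp_lap[OF y0e', of "-1/2"] by (simp add: n_def)
        moreover have "((norm (y0 - - e))\<^sup>2) powr (-1/2/2 - 1) > 0" using y0pe by simp
        moreover have "(-1/2) * (-1/2 + n - 2) < (0::real)" using n by simp
        ultimately show ?thesis by (simp add: mult_neg_pos)
      qed
      have "(\<Sum>i\<in>Basis. \<delta> * (rp2 0 (2 - n) y0 i + rp2 0 (1 - n) y0 i) + m * rp2 (-e) (-1/2) y0 i)
          = \<delta> * ((\<Sum>i\<in>Basis. rp2 0 (2 - n) y0 i) + (\<Sum>i\<in>Basis. rp2 0 (1 - n) y0 i)) + m * (\<Sum>i\<in>Basis. rp2 (-e) (-1/2) y0 i)"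
        by (simp add: sum.distrib sum_distrib_left[symmetric] distrib_left[symmetric])
      also have "\<dots> > \<delta> * ((n - 1) * norm y0 powr (-1 - n))"
        using L1 L2 L3 mneg by (simp add: mult_neg_neg)
      finally have lapgt: "laplacian u y0 > \<delta> * (n - 1) * norm y0 powr (-1 - n)" using lap by simp
      have upos: "u y0 > 0" using pos y0H by (simp add: halfspace_def)
      have "m * \<phi> y0 < 0" using mneg phipos[OF y0e(1)] by (simp add: mult_neg_pos)
      hence ult: "u y0 < \<delta> * \<Phi> y0" using psi0 by simp
      have "u y0 powr p < (\<delta> * \<Phi> y0) powr p"
        using upos ult p1 by (intro powr_less_mono2) auto
      hence "n * (n - 2) * u y0 powr p < n * (n - 2) * (\<delta> * \<Phi> y0) powr p" using n by simp
      also have "\<dots> \<le> \<delta> * (n - 1) * norm y0 powr (-1 - n)"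
        using KI[OF n p_def \<delta>(1) r0 y0e(2) \<delta>(3)] Phieq[OF y00] by simp
      finally have "n * (n - 2) * u y0 powr p < \<delta> * (n - 1) * norm y0 powr (-1 - n)" .
      moreover have "laplacian u y0 = n * (n - 2) * u y0 powr p"
        using pde y0H by (simp add: n_def p_def halfspace_def)
      ultimately show False using lapgt by simp
    qed
  qed
  show ?thesis
  proof (intro exI[of _ \<delta>] conjI allI impI)
    show "\<delta> > 0" by fact
    fix y assume y: "y \<bullet> e \<ge> 0 \<and> norm y \<ge> r0"
    hence y0: "y \<noteq> 0" using r0 by auto
    have "\<delta> * norm y powr (2 - n) \<le> \<delta> * \<Phi> y" using Phige[OF y0] \<delta> by simp
    also have "\<dots> \<le> u y" using main y by simp
    finally show "\<delta> * norm y powr (2 - real DIM('a)) \<le> u y" by (simp add: n_def)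
  qed
qed

lemma inner_sum_Basis_sub:
  fixes c :: "'a::euclidean_space \<Rightarrow> real"
  assumes S: "S \<subseteq> Basis" and i: "i \<in> Basis"
  shows "(\<Sum>k\<in>S. c k *\<^sub>R k) \<bullet> i = (if i \<in> S then c i else 0)"
proof -
  have fin: "finite S" using finite_subset[OF S finite_Basis] .
  have "(\<Sum>k\<in>S. c k *\<^sub>R k) \<bullet> i = (\<Sum>k\<in>S. c k * (k \<bullet> i))" by (simp add: inner_sum_left)
  also have "\<dots> = (\<Sum>k\<in>S. if k = i then c k else 0)"
  proof (rule sum.cong)
    fix k assume "k \<in> S"
    hence k: "k \<in> Basis" using S by blast
    show "c k * (k \<bullet> i) = (if k = i then c k else 0)" using inner_Basis[OF k i] by simp
  qed simp
  also have "\<dots> = (if i \<in> S then c i else 0)" using fin by (simp add: sum.delta')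
  finally show ?thesis .
qed
lemma between_abs:
  fixes x a b :: real
  assumes "\<bar>a\<bar> \<le> \<bar>b\<bar>" "min a b \<le> x" "x \<le> max a b"
  shows "\<bar>x\<bar> \<le> \<bar>b\<bar>"
  using assms by linarith

lemma seg_bound:
  fixes f f' :: "real \<Rightarrow> real"
  assumes D: "\<And>s. min 0 d \<le> s \<Longrightarrow> s \<le> max 0 d \<Longrightarrow> (f has_real_derivative f' s) (at s)"
    and B: "\<And>s. min 0 d \<le> s \<Longrightarrow> s \<le> max 0 d \<Longrightarrow> \<bar>f' s\<bar> \<le> K"
  shows "\<bar>f d - f 0\<bar> \<le> K * \<bar>d\<bar>"
proof (cases d "0::real" rule: linorder_cases)
  case less
  have "\<exists>z. d < z \<and> z < 0 \<and> f 0 - f d = (0 - d) * f' z"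
    by (rule MVT2) (use less D in auto)
  then obtain z where z: "d < z" "z < 0" "f 0 - f d = (0 - d) * f' z" by blast
  have "\<bar>f' z\<bar> \<le> K" using B z less by simp
  thus ?thesis using z less by (simp add: abs_mult abs_minus_commute mult.commute)
next
  case equal thus ?thesis by simp
next
  case greater
  have "\<exists>z. 0 < z \<and> z < d \<and> f d - f 0 = (d - 0) * f' z"
    by (rule MVT2) (use greater D in auto)
  then obtain z where z: "0 < z" "z < d" "f d - f 0 = (d - 0) * f' z" by blast
  have "\<bar>f' z\<bar> \<le> K" using B z greater by simp
  thus ?thesis using z greater by (simp add: abs_mult mult.commute mult_left_mono)
qed

lemma stair:
  fixes u :: "'a::euclidean_space \<Rightarrow> real" and g :: "'a \<Rightarrow> 'a \<Rightarrow> real" and e a b :: 'a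
  assumes e: "e \<in> Basis"
    and D: "\<And>x i. x \<bullet> e > 0 \<Longrightarrow> i \<in> Basis \<Longrightarrow> ((\<lambda>s. u (x + s *\<^sub>R i)) has_real_derivative g i x) (at 0)"
    and bnd: "\<And>x i. x \<bullet> e > 0 \<Longrightarrow> norm x \<le> norm b \<Longrightarrow> i \<in> Basis \<Longrightarrow> \<bar>g i x\<bar> \<le> K"
    and ae: "a \<bullet> e > 0" and be: "b \<bullet> e > 0"
    and comp: "\<And>i. i \<in> Basis \<Longrightarrow> \<bar>a \<bullet> i\<bar> \<le> \<bar>b \<bullet> i\<bar>"
  shows "\<bar>u b - u a\<bar> \<le> K * (\<Sum>i\<in>Basis. \<bar>(b - a) \<bullet> i\<bar>)"
proof -
  define p where "p S = a + (\<Sum>k\<in>S. ((b - a) \<bullet> k) *\<^sub>R k)" for S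
  have pcomp: "p S \<bullet> i = (if i \<in> S then b \<bullet> i else a \<bullet> i)" if "S \<subseteq> Basis" "i \<in> Basis" for S i
    using inner_sum_Basis_sub[OF that, of "\<lambda>k. (b - a) \<bullet> k"] by (simp add: p_def inner_add_left inner_diff_left)
  have step: "\<bar>u (p S) - u a\<bar> \<le> K * (\<Sum>i\<in>S. \<bar>(b - a) \<bullet> i\<bar>)" if "S \<subseteq> Basis" for S
    using finite_subset[OF that finite_Basis] that
  proof (induction S rule: finite_subset_induct')
    case empty thus ?case by (simp add: p_def)
  next
    case (insert j S)
    define d where "d = (b - a) \<bullet> j"
    have pins: "p (insert j S) = p S + d *\<^sub>R j"
      using insert by (simp add: p_def d_def add.assoc)
    have Sb: "S \<subseteq> Basis" using insert by auto
    have qprop: "(p S + s *\<^sub>R j) \<bullet> e > 0 \<and> norm (p S + s *\<^sub>R j) \<le> norm b"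
      if s: "min 0 d \<le> s" "s \<le> max 0 d" for s
    proof -
      have qc: "(p S + s *\<^sub>R j) \<bullet> i = (if i \<in> S then b \<bullet> i else a \<bullet> i) + (if i = j then s else 0)"
        if "i \<in> Basis" for i
        using pcomp[OF Sb that] insert(4) insert(2) that by (auto simp: inner_add_left inner_Basis)
      have jbet: "min (a \<bullet> j) (b \<bullet> j) \<le> a \<bullet> j + s \<and> a \<bullet> j + s \<le> max (a \<bullet> j) (b \<bullet> j)"
        using s by (auto simp: d_def inner_diff_left min_def max_def)
      have "(p S + s *\<^sub>R j) \<bullet> e > 0"
        using qc[OF e] insert(2) insert(4) jbet ae be by (auto simp: min_def max_def split: if_splits)
      moreover have "norm (p S + s *\<^sub>R j) \<le> norm b"
      proof (rule norm_le_componentwise)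
        fix i :: 'a assume i: "i \<in> Basis"
        show "\<bar>(p S + s *\<^sub>R j) \<bullet> i\<bar> \<le> \<bar>b \<bullet> i\<bar>"
        proof (cases "i = j")
          case True
          hence "i \<notin> S" using insert(4) by auto
          hence qj: "(p S + s *\<^sub>R j) \<bullet> i = a \<bullet> j + s" using qc[OF i] True by simp
          have "\<bar>a \<bullet> j + s\<bar> \<le> \<bar>b \<bullet> j\<bar>"
            using between_abs[of "a \<bullet> j" "b \<bullet> j" "a \<bullet> j + s"] comp[OF insert(2)] jbet by blast
          thus ?thesis using qj True by simp
        next
          case False thus ?thesis using qc[OF i] comp[OF i] by (cases "i \<in> S") simp_all
        qed
      qed
      ultimately show ?thesis by simp
    qed
    have seg: "\<bar>u (p S + d *\<^sub>R j) - u (p S + 0 *\<^sub>R j)\<bar> \<le> K * \<bar>d\<bar>"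
    proof (rule seg_bound[of d "\<lambda>s. u (p S + s *\<^sub>R j)" "\<lambda>s. g j (p S + s *\<^sub>R j)"])
      fix s assume s: "min 0 d \<le> s" "s \<le> max 0 d"
      have "((\<lambda>r. u ((p S + s *\<^sub>R j) + r *\<^sub>R j)) has_real_derivative g j (p S + s *\<^sub>R j)) (at 0)"
        by (rule D) (use qprop[OF s] insert(2) in auto)
      hence "((\<lambda>r. u (p S + (r + s) *\<^sub>R j)) has_real_derivative g j (p S + s *\<^sub>R j)) (at 0)"
        by (simp add: algebra_simps scaleR_add_left)
      thus "((\<lambda>s. u (p S + s *\<^sub>R j)) has_real_derivative g j (p S + s *\<^sub>R j)) (at s)"
        using DERIV_shift[of "\<lambda>s. u (p S + s *\<^sub>R j)" _ 0 s] by simp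
      show "\<bar>g j (p S + s *\<^sub>R j)\<bar> \<le> K" by (rule bnd) (use qprop[OF s] insert(2) in auto)
    qed
    have "\<bar>u (p (insert j S)) - u a\<bar> \<le> \<bar>u (p S + d *\<^sub>R j) - u (p S)\<bar> + \<bar>u (p S) - u a\<bar>"
      unfolding pins by linarith
    also have "\<dots> \<le> K * \<bar>d\<bar> + K * (\<Sum>i\<in>S. \<bar>(b - a) \<bullet> i\<bar>)" using seg insert(5) by simp
    also have "\<dots> = K * (\<Sum>i\<in>insert j S. \<bar>(b - a) \<bullet> i\<bar>)"
      using insert(1,4) by (simp add: d_def distrib_left)
    finally show ?case .
  qed
  have "p Basis = b" by (simp add: p_def euclidean_representation)
  thus ?thesis using step[of Basis] by simp
qed

lemma RL:
  fixes r s r0 \<alpha> m K ub ua :: real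
  assumes s: "0 < s" "s < r" "r \<le> r0" and \<alpha>: "\<alpha> > 0" and m: "m > 0" and K: "K \<ge> 0"
    and rK: "r0 * K \<le> \<alpha> * m" and ub: "ub \<ge> m" and ua: "ua \<le> ub + K * (r - s)"
  shows "s powr \<alpha> * ua \<le> r powr \<alpha> * ub"
proof -
  have "\<exists>z. s < z \<and> z < r \<and> r powr \<alpha> - s powr \<alpha> = (r - s) * (\<alpha> * z powr (\<alpha> - 1))"
    by (rule MVT2) (use s in \<open>auto intro!: has_real_derivative_powr\<close>)
  then obtain z where z: "s < z" "z < r" "r powr \<alpha> - s powr \<alpha> = (r - s) * (\<alpha> * z powr (\<alpha> - 1))" by blast
  have zpos: "z > 0" using z s by simp
  have "s powr \<alpha> \<le> z powr \<alpha>" using z s \<alpha> by (intro powr_mono2) auto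
  also have "z powr \<alpha> = z powr (\<alpha> - 1) * z"
  proof -
    have "z powr \<alpha> = z powr ((\<alpha> - 1) + 1)" by simp
    also have "\<dots> = z powr (\<alpha> - 1) * z powr 1" by (rule powr_add)
    finally show ?thesis using zpos by simp
  qed
  finally have sa: "s powr \<alpha> \<le> z powr (\<alpha> - 1) * z" .
  have zp: "z powr (\<alpha> - 1) > 0" using zpos by simp
  have "s powr \<alpha> * K \<le> z powr (\<alpha> - 1) * z * K" using sa K by (intro mult_right_mono) auto
  also have "\<dots> \<le> z powr (\<alpha> - 1) * (r0 * K)"
    using zp z s K by (simp add: mult.assoc mult_left_mono mult_right_mono)
  also have "\<dots> \<le> z powr (\<alpha> - 1) * (\<alpha> * m)" using zp rK by (intro mult_left_mono) auto
  finally have sK: "s powr \<alpha> * K \<le> z powr (\<alpha> - 1) * (\<alpha> * m)" .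
  have "s powr \<alpha> * ua \<le> s powr \<alpha> * (ub + K * (r - s))" using ua by (intro mult_left_mono) auto
  also have "\<dots> = s powr \<alpha> * ub + (s powr \<alpha> * K) * (r - s)" by (simp add: algebra_simps)
  also have "\<dots> \<le> s powr \<alpha> * ub + (z powr (\<alpha> - 1) * (\<alpha> * m)) * (r - s)"
    using sK s by (intro add_left_mono mult_right_mono) auto
  also have "(z powr (\<alpha> - 1) * (\<alpha> * m)) * (r - s) = ((r - s) * (\<alpha> * z powr (\<alpha> - 1))) * m"
    by (simp add: algebra_simps)
  also have "\<dots> = (r powr \<alpha> - s powr \<alpha>) * m" using z(3) by simp
  also have "(r powr \<alpha> - s powr \<alpha>) * m \<le> (r powr \<alpha> - s powr \<alpha>) * ub"
  proof -
    have "s powr \<alpha> \<le> r powr \<alpha>" using s \<alpha> by (intro powr_mono2) auto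
    thus ?thesis using ub by (intro mult_left_mono) auto
  qed
  finally show ?thesis by (simp add: algebra_simps)
qed

theorem proposition3p2:
  fixes u :: "'a::euclidean_space \<Rightarrow> real" and e :: 'a and c :: real
  assumes dim: "DIM('a) \<ge> 3"
    and e: "e \<in> Basis"
    and c: "c > 0"
    and C2: "C2_on (halfspace e) u"
    and C1: "C1_upto (halfspace e) u"
    and pde: "\<forall>x\<in>halfspace e. laplacian u x
               = real DIM('a) * (real DIM('a) - 2) * u x powr ((real DIM('a) + 2) / (real DIM('a) - 2))"
    and pos: "\<forall>x\<in>halfspace e. u x > 0"
    and bdry: "\<forall>x. x \<bullet> e = 0 \<longrightarrow>
               ((\<lambda>s. u (x + s *\<^sub>R e)) has_real_derivative
                 (- c * u x powr (real DIM('a) / (real DIM('a) - 2)))) (at_right 0)"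
  shows "\<exists>\<Lambda>>0. \<forall>l\<ge>\<Lambda>. \<forall>x. x \<in> halfspace e \<and> norm x < l \<and> x \<noteq> 0 \<longrightarrow>
           (let n = real DIM('a);
                v = (\<lambda>y. norm y powr (2 - n) * u ((1 / norm y ^ 2) *\<^sub>R y))
            in v x - l powr (n - 2) / norm x powr (n - 2) * v ((l\<^sup>2 / norm x ^ 2) *\<^sub>R x)) \<ge> 0"
proof -
  define n where "n = real DIM('a)"
  have n: "n \<ge> 3" using dim by (simp add: n_def)
  have ee: "e \<bullet> e = 1" using e by simp
  have clH: "closure (halfspace e) = {x. x \<bullet> e \<ge> 0}" by (rule closure_hs[OF e])
  have cont: "continuous_on {x. x \<bullet> e \<ge> 0} u" using C1 unfolding C1_upto_def clH by blast
  have u0: "u 0 > 0"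
  proof -
    have bd0: "((\<lambda>s. u (0 + s *\<^sub>R e)) has_real_derivative
       (- c * u 0 powr (real DIM('a) / (real DIM('a) - 2)))) (at_right 0)"
      using bdry[rule_format, of 0] by simp
    show ?thesis by (rule hopf0[OF dim e C2 cont pde pos bd0])
  qed
  define m where "m = u 0 / 2"
  have mpos: "m > 0" using u0 by (simp add: m_def)
  obtain \<rho>0 where \<rho>0: "\<rho>0 > 0" "\<And>y. y \<bullet> e \<ge> 0 \<Longrightarrow> norm y \<le> \<rho>0 \<Longrightarrow> u y \<ge> m"
  proof -
    have "(0::'a) \<in> {x. x \<bullet> e \<ge> 0}" by simp
    then obtain d where d: "d > 0" "\<forall>x'\<in>{x. x \<bullet> e \<ge> 0}. dist x' 0 < d \<longrightarrow> dist (u x') (u 0) < m"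
      using cont mpos unfolding continuous_on_iff by blast
    show ?thesis
    proof (rule that[of "d/2"])
      show "d/2 > 0" using d by simp
      fix y assume y: "y \<bullet> e \<ge> 0" "norm y \<le> d/2"
      hence "dist (u y) (u 0) < m" using d by auto
      thus "u y \<ge> m" unfolding m_def dist_real_def by linarith
    qed
  qed
  define \<rho>1 where "\<rho>1 = min \<rho>0 1"
  have \<rho>1: "\<rho>1 > 0" "\<rho>1 \<le> \<rho>0" "\<rho>1 \<le> 1" using \<rho>0 by (auto simp: \<rho>1_def)
  obtain G where G: "\<forall>i\<in>Basis. continuous_on {x. x \<bullet> e \<ge> 0} (G i) \<and>
        (\<forall>x\<in>halfspace e. ((\<lambda>s. u (x + s *\<^sub>R i)) has_real_derivative G i x) (at 0))"
    using C1 unfolding C1_upto_def clH by metis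
  define CB where "CB = {x::'a. x \<bullet> e \<ge> 0} \<inter> cball 0 1"
  have cCB: "compact CB"
  proof -
    have "closed {x::'a. 0 \<le> x \<bullet> e}" using closed_halfspace_ge[of 0 e] by (simp add: inner_commute)
    hence "compact (cball 0 1 \<inter> {x::'a. 0 \<le> x \<bullet> e})" by (intro compact_Int_closed compact_cball)
    thus ?thesis by (simp add: CB_def Int_commute)
  qed
  have CBsub: "CB \<subseteq> {x. x \<bullet> e \<ge> 0}" by (auto simp: CB_def)
  have "bounded (\<Union>i\<in>Basis. G i ` CB)"
  proof (intro bounded_UN finite_Basis ballI)
    fix i :: 'a assume i: "i \<in> Basis"
    show "bounded (G i ` CB)"
      using G i cCB CBsub by (meson compact_continuous_image compact_imp_bounded continuous_on_subset)
  qed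
  then obtain KG where KG: "\<forall>z\<in>(\<Union>i\<in>Basis. G i ` CB). norm z \<le> KG" unfolding bounded_iff by blast
  define K1 where "K1 = \<bar>KG\<bar>"
  have GB: "\<bar>G i x\<bar> \<le> K1" if "i \<in> Basis" "x \<in> CB" for i x
    using KG that unfolding K1_def by fastforce
  have lip: "\<bar>u b - u a\<bar> \<le> K1 * (\<Sum>i\<in>Basis. \<bar>(b - a) \<bullet> i\<bar>)"
    if ab: "a \<bullet> e > 0" "b \<bullet> e > 0" "norm b \<le> 1" "\<And>i. i \<in> Basis \<Longrightarrow> \<bar>a \<bullet> i\<bar> \<le> \<bar>b \<bullet> i\<bar>" for a b
  proof (rule stair[OF e _ _ ab(1,2) ab(4), of u G])
    show "((\<lambda>s. u (x + s *\<^sub>R i)) has_real_derivative G i x) (at 0)" if "x \<bullet> e > 0" "i \<in> Basis" for x i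
      using G that by (auto simp: halfspace_def)
    show "\<bar>G i x\<bar> \<le> K1" if "x \<bullet> e > 0" "norm x \<le> norm b" "i \<in> Basis" for x i
      using GB that ab(3) by (auto simp: CB_def)
  qed
  define Kc where "Kc = K1 * n + 1"
  have Kc: "Kc > 0" using n by (simp add: Kc_def K1_def add_nonneg_pos)
  define \<alpha> where "\<alpha> = (n - 2) / 2"
  have \<alpha>: "\<alpha> > 0" using n by (simp add: \<alpha>_def)
  define r0 where "r0 = min \<rho>1 (\<alpha> * m / Kc)"
  have r0: "r0 > 0" "r0 \<le> \<rho>1" "r0 * Kc \<le> \<alpha> * m"
    using \<rho>1 \<alpha> mpos Kc by (auto simp: r0_def min_def field_simps)
  have near: "\<forall>y. y \<bullet> e \<ge> 0 \<and> norm y = r0 \<longrightarrow> u y \<ge> m" using \<rho>0(2) r0 \<rho>1 by auto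
  obtain \<delta> where \<delta>: "\<delta> > 0" "\<And>y. y \<bullet> e \<ge> 0 \<Longrightarrow> norm y \<ge> r0 \<Longrightarrow> u y \<ge> \<delta> * norm y powr (2 - n)"
    using lower_bound[OF dim e _ C2 cont pde pos bdry r0(1) mpos near] c unfolding n_def by auto
  obtain Mb where Mb: "\<forall>x\<in>CB. norm (u x) \<le> Mb"
    using compact_imp_bounded[OF compact_continuous_image[OF continuous_on_subset[OF cont CBsub] cCB]]
    unfolding bounded_iff by auto
  define M where "M = max Mb 1"
  have M: "M > 0" "\<And>x. x \<in> CB \<Longrightarrow> u x \<le> M" using Mb by (auto simp: M_def)
  define \<Lambda> where "\<Lambda> = max 1 ((M / \<delta>) powr (1 / (n - 2)))"
  show ?thesis
  proof (intro exI[of _ \<Lambda>] conjI allI impI)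
    show "\<Lambda> > 0" by (simp add: \<Lambda>_def)
    fix l :: real and x :: 'a
    assume l: "\<Lambda> \<le> l" and x: "x \<in> halfspace e \<and> norm x < l \<and> x \<noteq> 0"
    have l1: "l \<ge> 1" using l by (simp add: \<Lambda>_def)
    have lpos: "l > 0" using l1 by simp
    define X where "X = norm x"
    have Xpos: "X > 0" using x by (simp add: X_def)
    have Xl: "X < l" using x by (simp add: X_def)
    have xe: "x \<bullet> e > 0" using x by (simp add: halfspace_def)
    define a where "a = (1 / l\<^sup>2) *\<^sub>R x"
    define b where "b = (1 / X\<^sup>2) *\<^sub>R x"
    have ae: "a \<bullet> e > 0" using xe lpos by (simp add: a_def)
    have be: "b \<bullet> e > 0" using xe Xpos by (simp add: b_def)
    have na: "norm a = X / l\<^sup>2" using lpos by (simp add: a_def X_def)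
    have nb: "norm b = 1 / X" using Xpos by (simp add: b_def X_def power2_eq_square)
    have n2: "n - 2 > 0" using n by simp
    have key: "l powr (2 - n) * u a \<le> X powr (2 - n) * u b"
    proof (cases "X \<le> 1 / r0")
      case True
      have "1 / X \<ge> r0" using True Xpos r0(1) by (simp add: field_simps)
      hence ub: "u b \<ge> \<delta> * (1 / X) powr (2 - n)" using \<delta>(2)[of b] be nb by simp
      have "X powr (2 - n) * (1 / X) powr (2 - n) = (X * (1 / X)) powr (2 - n)"
        by (rule powr_mult[symmetric])
      also have "\<dots> = 1" using Xpos by simp
      finally have "X powr (2 - n) * (\<delta> * (1 / X) powr (2 - n)) = \<delta>" by (simp add: algebra_simps)
      from this[symmetric] have A: "X powr (2 - n) * u b \<ge> \<delta>"
        using ub by (metis mult_left_mono powr_ge_zero)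
      have "X / l\<^sup>2 \<le> 1"
      proof -
        have "X / l\<^sup>2 \<le> l / l\<^sup>2" using Xl lpos by (simp add: divide_right_mono)
        also have "\<dots> = 1 / l" using lpos by (simp add: power2_eq_square)
        also have "\<dots> \<le> 1" using l1 by simp
        finally show ?thesis .
      qed
      hence "a \<in> CB" using ae na by (simp add: CB_def)
      hence ua: "u a \<le> M" using M(2) by blast
      have "((M / \<delta>) powr (1 / (n - 2))) powr (n - 2) \<le> l powr (n - 2)"
        using l n2 by (intro powr_mono2) (auto simp: \<Lambda>_def)
      hence "M / \<delta> \<le> l powr (n - 2)" using n2 M \<delta> by (simp add: powr_powr)
      hence lM: "l powr (2 - n) * M \<le> \<delta>"
      proof -
        assume h: "M / \<delta> \<le> l powr (n - 2)"
        have lp: "l powr (n - 2) > 0" using lpos by simp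
        have "l powr (2 - n) = 1 / l powr (n - 2)"
          using powr_minus_divide[of l "n - 2"] by simp
        hence "l powr (2 - n) * M = M / l powr (n - 2)" by simp
        also have "\<dots> \<le> \<delta>" using h lp \<delta>(1) by (simp add: field_simps)
        finally show ?thesis .
      qed
      have "l powr (2 - n) * u a \<le> l powr (2 - n) * M" using ua by (intro mult_left_mono) auto
      thus ?thesis using lM A by linarith
    next
      case False
      define r where "r = 1 / X"
      define s where "s = X / l\<^sup>2"
      have rpos: "r > 0" using Xpos by (simp add: r_def)
      have spos: "s > 0" using Xpos lpos by (simp add: s_def)
      have sr: "s < r"
      proof -
        have "X * X < l * l" using Xl Xpos by (simp add: mult_strict_mono)
        thus ?thesis using Xpos lpos by (simp add: s_def r_def field_simps power2_eq_square)
      qed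
      have rr0: "r < r0" using False Xpos r0(1) by (simp add: r_def field_simps)
      have nbr: "norm b = r" using nb by (simp add: r_def)
      have ub: "u b \<ge> m" using \<rho>0(2)[of b] be nbr rr0 r0(2) \<rho>1(2) by simp
      have comp: "\<bar>a \<bullet> i\<bar> \<le> \<bar>b \<bullet> i\<bar>" if "i \<in> Basis" for i
      proof -
        have "1 / l\<^sup>2 \<le> 1 / X\<^sup>2" using Xl Xpos by (intro divide_left_mono power_mono) auto
        hence "\<bar>x \<bullet> i\<bar> * (1 / l\<^sup>2) \<le> \<bar>x \<bullet> i\<bar> * (1 / X\<^sup>2)" by (intro mult_left_mono) auto
        thus ?thesis by (simp add: a_def b_def abs_mult)
      qed
      have L: "\<bar>u b - u a\<bar> \<le> K1 * (\<Sum>i\<in>Basis. \<bar>(b - a) \<bullet> i\<bar>)"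
        by (rule lip[OF ae be _ comp]) (use nbr rr0 r0(2) \<rho>1(3) in auto)
      have "(\<Sum>i\<in>Basis. \<bar>(b - a) \<bullet> i\<bar>) \<le> of_nat (card (Basis::'a set)) * norm (b - a)"
        by (rule sum_bounded_above) (rule Basis_le_norm)
      hence S: "(\<Sum>i\<in>Basis. \<bar>(b - a) \<bullet> i\<bar>) \<le> n * norm (b - a)" by (simp add: n_def)
      have "b - a = (1 / X\<^sup>2 - 1 / l\<^sup>2) *\<^sub>R x" by (simp add: a_def b_def scaleR_diff_left)
      moreover have "1 / X\<^sup>2 - 1 / l\<^sup>2 \<ge> 0" using Xl Xpos by (simp add: divide_left_mono power_mono)
      ultimately have "norm (b - a) = (1 / X\<^sup>2 - 1 / l\<^sup>2) * X" by (simp add: X_def)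
      also have "\<dots> = r - s" using Xpos by (simp add: r_def s_def field_simps power2_eq_square)
      finally have nba: "norm (b - a) = r - s" .
      have K1: "K1 \<ge> 0" by (simp add: K1_def)
      have "\<bar>u b - u a\<bar> \<le> K1 * (n * (r - s))" using L S nba K1 by (metis mult_left_mono order_trans)
      also have "\<dots> \<le> Kc * (r - s)" using sr by (simp add: Kc_def algebra_simps)
      finally have ua: "u a \<le> u b + Kc * (r - s)" by simp
      have RLi: "s powr \<alpha> * u a \<le> r powr \<alpha> * u b"
        by (rule RL[OF spos sr _ \<alpha> mpos _ _ ub ua]) (use rr0 r0 Kc in auto)
      have rs: "r * s = 1 / l\<^sup>2" using Xpos by (simp add: r_def s_def)
      have e1: "l powr (2 - n) = r powr \<alpha> * s powr \<alpha>"
      proof -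
        have "r powr \<alpha> * s powr \<alpha> = (1 / l\<^sup>2) powr \<alpha>" using rs rpos spos by (simp add: powr_mult[symmetric])
        also have "\<dots> = 1 / (l\<^sup>2) powr \<alpha>" by (simp add: powr_divide)
        also have "(l\<^sup>2) powr \<alpha> = l powr (n - 2)"
        proof -
          have "(l\<^sup>2) powr \<alpha> = (l powr 2) powr \<alpha>" using lpos by simp
          also have "\<dots> = l powr (2 * \<alpha>)" by (simp add: powr_powr)
          also have "2 * \<alpha> = n - 2" by (simp add: \<alpha>_def)
          finally show ?thesis .
        qed
        also have "1 / l powr (n - 2) = l powr (2 - n)" using powr_minus_divide[of l "n - 2"] by simp
        finally show ?thesis by simp
      qed
      have e2: "X powr (2 - n) = r powr \<alpha> * r powr \<alpha>"
      proof -
        have "X = 1 / r" using Xpos by (simp add: r_def)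
        hence "X powr (2 - n) = 1 / r powr (2 - n)" by (simp add: powr_divide)
        also have "\<dots> = r powr (n - 2)" using powr_minus_divide[of r "2 - n"] by simp
        also have "\<dots> = r powr (\<alpha> + \<alpha>)" by (simp add: \<alpha>_def)
        also have "\<dots> = r powr \<alpha> * r powr \<alpha>" by (rule powr_add)
        finally show ?thesis .
      qed
      have "l powr (2 - n) * u a = r powr \<alpha> * (s powr \<alpha> * u a)" using e1 by simp
      also have "\<dots> \<le> r powr \<alpha> * (r powr \<alpha> * u b)" using RLi by (intro mult_left_mono) auto
      also have "\<dots> = X powr (2 - n) * u b" using e2 by simp
      finally show ?thesis .
    qed
    have nz: "norm ((l\<^sup>2 / X\<^sup>2) *\<^sub>R x) = l\<^sup>2 / X"
      using Xpos by (simp add: X_def power2_eq_square)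
    have coef: "(1 / (l\<^sup>2 / X)\<^sup>2) * (l\<^sup>2 / X\<^sup>2) = 1 / l\<^sup>2"
      using Xpos lpos by (simp add: field_simps power2_eq_square)
    have "(1 / (l\<^sup>2 / X)\<^sup>2) *\<^sub>R ((l\<^sup>2 / X\<^sup>2) *\<^sub>R x) = ((1 / (l\<^sup>2 / X)\<^sup>2) * (l\<^sup>2 / X\<^sup>2)) *\<^sub>R x"
      by (rule scaleR_scaleR)
    hence sc: "(1 / (norm ((l\<^sup>2 / X\<^sup>2) *\<^sub>R x))\<^sup>2) *\<^sub>R ((l\<^sup>2 / X\<^sup>2) *\<^sub>R x) = a"
      unfolding nz coef a_def .
    have E4: "l powr (n - 2) / X powr (n - 2) * (l\<^sup>2 / X) powr (2 - n) = l powr (2 - n)"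
    proof -
      have "(l\<^sup>2 / X) powr (2 - n) = (l\<^sup>2) powr (2 - n) / X powr (2 - n)" by (rule powr_divide)
      also have "(l\<^sup>2) powr (2 - n) = l powr (2 * (2 - n))"
      proof -
        have "(l\<^sup>2) powr (2 - n) = (l powr 2) powr (2 - n)" using lpos by simp
        thus ?thesis by (simp add: powr_powr)
      qed
      finally have h: "(l\<^sup>2 / X) powr (2 - n) = l powr (2 * (2 - n)) / X powr (2 - n)" .
      have "l powr (n - 2) * l powr (2 * (2 - n)) = l powr ((n - 2) + 2 * (2 - n))" by (rule powr_add[symmetric])
      also have "\<dots> = l powr (2 - n)" by (simp add: algebra_simps)
      finally have h1: "l powr (n - 2) * l powr (2 * (2 - n)) = l powr (2 - n)" .
      have "X powr (n - 2) * X powr (2 - n) = X powr ((n - 2) + (2 - n))" by (rule powr_add[symmetric])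
      also have "\<dots> = 1" using Xpos by simp
      finally have h2: "X powr (n - 2) * X powr (2 - n) = 1" .
      have "l powr (n - 2) / X powr (n - 2) * (l\<^sup>2 / X) powr (2 - n)
          = (l powr (n - 2) * l powr (2 * (2 - n))) / (X powr (n - 2) * X powr (2 - n))"
        unfolding h by simp
      thus ?thesis using h1 h2 by simp
    qed
    have "l powr (n - 2) / X powr (n - 2) * ((l\<^sup>2 / X) powr (2 - n) * u a) = 
        (l powr (n - 2) / X powr (n - 2) * (l\<^sup>2 / X) powr (2 - n)) * u a" by (simp only: mult.assoc)
    hence "l powr (n - 2) / X powr (n - 2) * ((l\<^sup>2 / X) powr (2 - n) * u a) = l powr (2 - n) * u a"
      unfolding E4 .
    hence goal: "X powr (2 - n) * u b - l powr (n - 2) / X powr (n - 2) * ((l\<^sup>2 / X) powr (2 - n) * u a) \<ge> 0"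
      using key by simp
    show "(let n = real DIM('a);
                v = (\<lambda>y. norm y powr (2 - n) * u ((1 / norm y ^ 2) *\<^sub>R y))
            in v x - l powr (n - 2) / norm x powr (n - 2) * v ((l\<^sup>2 / norm x ^ 2) *\<^sub>R x)) \<ge> 0"
    proof -
      have ua': "u ((l\<^sup>2 / ((l\<^sup>2 / X)\<^sup>2 * X\<^sup>2)) *\<^sub>R x) = u a"
      proof -
        have "l\<^sup>2 / ((l\<^sup>2 / X)\<^sup>2 * X\<^sup>2) = 1 / l\<^sup>2" using Xpos lpos by (simp add: field_simps power2_eq_square)
        thus ?thesis by (simp add: a_def)
      qed
      show ?thesis unfolding Let_def X_def[symmetric] n_def[symmetric] nz using goal ua' by (simp add: b_def)
    qed
  qed
qed

end
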